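(* Consider the normal linear model $y=\alpha\mathbf 1+X\beta+\epsilon$, $\epsilon\sim N(0,\sigma^2I_n)$, with a hyper-$g$ prior with hyperparameter $a>2$, where $X=(X_1,X_2)$ is an $n\times p$ centered design of full column rank, and consider the sequence of problems $\Psi_N$ with data $y_N=\alpha\mathbf 1+X_1\beta_{1(N)}+X_2\beta_2+\epsilon$, where $X_1,X_2,\alpha,\beta_2,\epsilon$ are fixed and $\|\beta_{1(N)}\|\to\infty$. If $n>a+p-1$, then the posterior distribution of $\sigma^2$ converges, as $N\to\infty$, to the inverse gamma distribution with density proportional to $$(\sigma^2)^{-\left(\frac{n+1-a-p}{2}+1\right)}\exp\!\Big[-\frac{(n-p-1)\widehat\sigma^2}{2\sigma^2}\Big],\qquad \sigma^2>0,$$ i.e. an $IG\big(\frac{n+1-a-p}{2},\frac{2}{(n-p-1)\widehat\sigma^2}\big)$ distribution, where $\widehat\sigma^2=\|y-\widehat\alpha_{LS}\mathbf 1-X\widehat\beta_{LS}\|^2/(n-p-1)$ (which does not depend on $N$).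
   Context: Hyper-$g$ prior: $\pi(\alpha,\sigma^2)\propto1/\sigma^2$; $\beta\mid g,\sigma^2\sim N(0,g\sigma^2(X^TX)^{-1})$; $g$ has density $\frac{a-2}{2}(1+g)^{-a/2}$, $g>0$. $\widehat\alpha_{LS},\widehat\beta_{LS}$ are the least squares estimates. The response is centered. *)

theory Defs
  imports "HOL-Probability.Probability"
begin

text \<open>Observations are indexed by the finite type 'n (n = CARD('n)), predictors by
  the finite type 'p (p = CARD('p)). The design X is an n x p real matrix.\<close>

definition centered_design :: "real^'p^'n \<Rightarrow> bool" where
  "centered_design X \<longleftrightarrow> (\<forall>j. (\<Sum>i\<in>UNIV. X $ i $ j) = 0)"

definition mvn_density :: "real^'p \<Rightarrow> real^'p^'p \<Rightarrow> real^'p \<Rightarrow> real" where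
  "mvn_density \<mu> \<Sigma> x =
     (2 * pi) powr (- real CARD('p) / 2) / sqrt (det \<Sigma>) *
     exp (- (1/2) * ((x - \<mu>) \<bullet> (matrix_inv \<Sigma> *v (x - \<mu>))))"

text \<open>Normal likelihood of y = alpha 1 + X beta + eps, eps ~ N(0, s I_n), s = sigma^2.\<close>
definition likelihood :: "real^'p^'n \<Rightarrow> real^'n \<Rightarrow> real \<Rightarrow> real^'p \<Rightarrow> real \<Rightarrow> real" where
  "likelihood X y \<alpha> \<beta> s =
     (2 * pi * s) powr (- real CARD('n) / 2) *
     exp (- (norm (y - vec \<alpha> - X *v \<beta>))\<^sup>2 / (2 * s))"

definition hyper_g_density :: "real \<Rightarrow> real \<Rightarrow> real" where
  "hyper_g_density a g = (a - 2) / 2 * (1 + g) powr (- a / 2)"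

text \<open>Unnormalised joint posterior density of (alpha, beta, g, s), s = sigma^2 > 0, g > 0:
  likelihood * pi(alpha, s) * pi(beta | g, s) * pi(g), with pi(alpha, s) = 1/s and
  beta | g, s ~ N(0, g s (X^T X)^{-1}).\<close>
definition joint_post :: "real^'p^'n \<Rightarrow> real \<Rightarrow> real^'n \<Rightarrow> real \<Rightarrow> real^'p \<Rightarrow> real \<Rightarrow> real \<Rightarrow> ennreal" where
  "joint_post X a y \<alpha> \<beta> g s =
     ennreal (likelihood X y \<alpha> \<beta> s * (1 / s) *
              mvn_density 0 ((g * s) *\<^sub>R matrix_inv (transpose X ** X)) \<beta> *
              hyper_g_density a g)"

definition sigma2_post_unnorm :: "real^'p^'n \<Rightarrow> real \<Rightarrow> real^'n \<Rightarrow> real \<Rightarrow> ennreal" where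
  "sigma2_post_unnorm X a y s =
     (if s > 0 then
        (\<integral>\<^sup>+ \<alpha>. (\<integral>\<^sup>+ \<beta>. (\<integral>\<^sup>+ g. indicator {0<..} g * joint_post X a y \<alpha> \<beta> g s \<partial>lborel) \<partial>lborel) \<partial>lborel)
      else 0)"

definition sigma2_posterior :: "real^'p^'n \<Rightarrow> real \<Rightarrow> real^'n \<Rightarrow> real measure" where
  "sigma2_posterior X a y =
     density lborel (\<lambda>s. sigma2_post_unnorm X a y s /
                          (\<integral>\<^sup>+ t. sigma2_post_unnorm X a y t \<partial>lborel))"

definition is_LS :: "real^'p^'n \<Rightarrow> real^'n \<Rightarrow> real \<times> (real^'p) \<Rightarrow> bool" where
  "is_LS X y ab \<longleftrightarrow>
     (\<forall>\<alpha> \<beta>. (norm (y - vec (fst ab) - X *v snd ab))\<^sup>2 \<le> (norm (y - vec \<alpha> - X *v \<beta>))\<^sup>2)"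

definition LS_estimate :: "real^'p^'n \<Rightarrow> real^'n \<Rightarrow> real \<times> (real^'p)" where
  "LS_estimate X y = (SOME ab. is_LS X y ab)"

definition sigma_hat2 :: "real^'p^'n \<Rightarrow> real^'n \<Rightarrow> real" where
  "sigma_hat2 X y =
     (let (\<alpha>, \<beta>) = LS_estimate X y in
        (norm (y - vec \<alpha> - X *v \<beta>))\<^sup>2 / (real CARD('n) - real CARD('p) - 1))"

text \<open>Inverse gamma distribution IG(k, theta) (scale parametrisation as in the paper):
  density (1/theta)^k / Gamma k * s^(-(k+1)) * exp(-1/(theta s)) for s > 0.\<close>
definition inv_gamma_density :: "real \<Rightarrow> real \<Rightarrow> real \<Rightarrow> real" where
  "inv_gamma_density k \<theta> s =
     (if s > 0 then (1/\<theta>) powr k / Gamma k * s powr (-(k + 1)) * exp (- 1 / (\<theta> * s)) else 0)"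

definition inv_gamma_measure :: "real \<Rightarrow> real \<Rightarrow> real measure" where
  "inv_gamma_measure k \<theta> = density lborel (\<lambda>s. ennreal (inv_gamma_density k \<theta> s))"

end

theory Submission
  imports Defs
begin

lemma gauss1:
  fixes v m :: real assumes v: "v > 0"
  shows "(\<integral>\<^sup>+x. ennreal (exp (-(x - m)\<^sup>2 / (2 * v))) \<partial>lborel) = ennreal (sqrt (2 * pi * v))"
proof -
  have e: "ennreal (exp (-(x - m)\<^sup>2 / (2 * v))) = ennreal (sqrt (2 * pi * v)) * ennreal (normal_density m (sqrt v) x)" for x
    using v by (simp add: normal_density_def ennreal_mult[symmetric] real_sqrt_mult)
  have "(\<integral>\<^sup>+x. ennreal (normal_density m (sqrt v) x) \<partial>lborel) = 1"
    using v by (subst nn_integral_eq_integral) (auto intro!: integrable_normal_density integral_normal_density)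
  then show ?thesis
    unfolding e by (simp add: nn_integral_cmult)
qed


lemma Gamma_integral_real':
  assumes x: "x > (0 :: real)"
  shows   "((\<lambda>t. t powr (x - 1) / exp t) has_integral Gamma x) {0<..}"
proof -
  have "((\<lambda>t. t powr (x - 1) / exp t) has_integral Gamma x) {0..}"
    by (rule Gamma_integral_real) fact
  hence "((\<lambda>t. if t \<in> {0<..} then t powr (x - 1) / exp t else 0) has_integral Gamma x) {0..}"
    by (rule has_integral_spike [of "{0}", rotated 2]) auto
  also have "?this = ?thesis"
    by (subst has_integral_restrict) auto
  finally show ?thesis .
qed

lemma inv_gamma_integral:
  fixes k b :: real assumes k: "k > 0" and b: "b > 0"
  shows "(\<integral>\<^sup>+s. ennreal (s powr (-(k+1)) * exp (- b / s)) * indicator {0<..} s \<partial>lborel)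
         = ennreal (b powr (-k) * Gamma k)"
proof -
  define f where "f t = t powr (k - 1) / exp t" for t :: real
  have fI: "(f has_integral Gamma k) {0<..}" unfolding f_def by (rule Gamma_integral_real'[OF k])
  have fA: "f absolutely_integrable_on {0<..}"
    using fI by (intro nonnegative_absolutely_integrable_1) (auto simp: f_def)
  have img: "(\<lambda>s. b / s) ` {0<..} = {0::real<..}"
  proof
    show "{0<..} \<subseteq> (\<lambda>s. b / s) ` {0<..}"
    proof
      fix t :: real assume "t \<in> {0<..}"
      then have "t = b / (b / t)" "b / t \<in> {0<..}" using b by auto
      then show "t \<in> (\<lambda>s. b / s) ` {0<..}" by blast
    qed
  qed (use b in auto)
  have der: "((\<lambda>s. b / s) has_field_derivative (- b / s\<^sup>2)) (at s within {0<..})" if "s \<in> {0<..}" for s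
    using that by (auto intro!: derivative_eq_intros simp: power2_eq_square field_simps)
  have inj: "inj_on (\<lambda>s. b / s) {0::real<..}"
    using b by (auto simp: inj_on_def field_simps)
  from has_absolute_integral_change_of_variables_1'[of "{0<..}" "\<lambda>s. b / s" "\<lambda>s. - b / s\<^sup>2" f "Gamma k", OF _ der inj]
  have "(\<lambda>x. \<bar>- b / x\<^sup>2\<bar> * f (b / x)) absolutely_integrable_on {0<..} \<and>
        integral {0<..} (\<lambda>x. \<bar>- b / x\<^sup>2\<bar> * f (b / x)) = Gamma k"
    using fA fI img by (simp add: has_integral_iff)
  then have h1: "((\<lambda>x. \<bar>- b / x\<^sup>2\<bar> * f (b / x)) has_integral Gamma k) {0<..}"
    using has_integral_iff set_lebesgue_integral_eq_integral(1) by (metis absolutely_integrable_on_def)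
  have eq: "\<bar>- b / x\<^sup>2\<bar> * f (b / x) = b powr k * (x powr (-(k+1)) * exp (- b / x))" if "x \<in> {0<..}" for x
  proof -
    have x: "x > 0" using that by auto
    have "(b / x) powr (k - 1) = b powr (k - 1) * x powr (1 - k)"
      using x b by (simp add: powr_divide powr_minus_divide powr_diff divide_simps)
    moreover have "b powr k = b powr (k - 1) * b" using b by (simp add: powr_diff)
    moreover have "x powr (-(k+1)) = x powr (1 - k) / x\<^sup>2"
      using x by (simp add: powr_add[symmetric] powr_diff power2_eq_square powr_minus divide_simps)
    moreover have "\<bar>- b / x\<^sup>2\<bar> = b / x\<^sup>2" using b x by simp
    moreover have "1 / exp (b / x) = exp (- b / x)" by (simp add: exp_minus field_simps)
    ultimately have "\<bar>- b / x\<^sup>2\<bar> * f (b / x) = (b / x\<^sup>2) * (b powr (k - 1) * x powr (1 - k)) * exp (- b / x)"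
      unfolding f_def by (metis (no_types, lifting) divide_inverse inverse_eq_divide mult.assoc)
    also have "\<dots> = (b powr (k - 1) * b) * (x powr (1 - k) / x\<^sup>2) * exp (- b / x)"
      by (simp add: field_simps)
    also have "\<dots> = (b powr (k - 1) * b) * ((x powr (1 - k) / x\<^sup>2) * exp (- b / x))"
      by (rule mult.assoc)
    finally show ?thesis using \<open>b powr k = _\<close> \<open>x powr (-(k+1)) = _\<close> by (simp only:)
  qed
  have h2: "((\<lambda>x. b powr k * (x powr (-(k+1)) * exp (- b / x))) has_integral Gamma k) {0<..}"
    by (rule iffD1[OF has_integral_cong[OF eq] h1])
  have h3: "((\<lambda>x. x powr (-(k+1)) * exp (- b / x)) has_integral (b powr (-k) * Gamma k)) {0<..}"
  proof -
    have 1: "((\<lambda>x. b powr (-k) * (b powr k * (x powr (-(k+1)) * exp (- b / x)))) has_integral (b powr (-k) * Gamma k)) {0<..}"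
      by (rule has_integral_mult_right[OF h2])
    have 2: "b powr (-k) * (b powr k * y) = y" for y
      using b by (simp add: powr_minus field_simps)
    show ?thesis using 1 unfolding 2 .
  qed
  show ?thesis
    by (rule nn_integral_has_integral_lebesgue'[OF _ h3]) simp
qed


lemma mvmult_measurable[measurable]:
  fixes X :: "real^'p^'n"
  shows "(\<lambda>x. X *v x) \<in> borel_measurable borel"
  by (intro borel_measurable_continuous_onI matrix_vector_mult_linear_continuous_on)

lemma nn_integral_lborel_pos:
  fixes f :: "'a::euclidean_space \<Rightarrow> real"
  assumes [measurable]: "f \<in> borel_measurable borel" and pos: "\<And>x. f x > 0"
  shows "(\<integral>\<^sup>+x. ennreal (f x) \<partial>lborel) > 0"
proof (rule ccontr)
  assume "\<not> ?thesis"
  then have "(\<integral>\<^sup>+x. ennreal (f x) \<partial>lborel) = 0" by (simp add: not_gr_zero)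
  then have "AE x in lborel. ennreal (f x) = 0" by (subst (asm) nn_integral_0_iff_AE) auto
  then obtain N where N: "N \<in> null_sets (lborel :: 'a measure)" "{x\<in>space lborel. ennreal (f x) \<noteq> 0} \<subseteq> N"
    by (auto simp: eventually_ae_filter)
  moreover have "ennreal (f x) \<noteq> 0" for x using pos[of x] by simp
  then have "{x\<in>space lborel. ennreal (f x) \<noteq> 0} = UNIV" by auto
  ultimately have N: "N \<in> null_sets (lborel :: 'a measure)" "UNIV \<subseteq> N" by auto
  then have "emeasure lborel (UNIV :: 'a set) \<le> emeasure lborel N"
    by (intro emeasure_mono) auto
  with N show False by (auto dest!: null_setsD1)
qed

lemma gauss_vec_finite:
  fixes X :: "real^'p^'n"
  assumes inj: "inj ((*v) X)"
  shows "(\<integral>\<^sup>+\<beta>. ennreal (exp (- (norm (X *v \<beta>))\<^sup>2)) \<partial>lborel) < \<infinity>"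
proof -
  obtain B where B: "B > 0" "\<And>x. B * norm x \<le> norm (X *v x)"
    using linear_inj_bounded_below_pos[of "(*v) X"] inj by (metis matrix_vector_mul_linear)
  have le: "ennreal (exp (- (norm (X *v \<beta>))\<^sup>2)) \<le> (\<Prod>b\<in>Basis. ennreal (exp (- (B\<^sup>2) * (\<beta> \<bullet> b)\<^sup>2)))" for \<beta> :: "real^'p"
  proof -
    have "(B * norm \<beta>)\<^sup>2 \<le> (norm (X *v \<beta>))\<^sup>2"
      using B(2)[of \<beta>] B(1) by (intro power_mono) auto
    moreover have "(norm \<beta>)\<^sup>2 = (\<Sum>b\<in>Basis. (\<beta> \<bullet> b)\<^sup>2)"
      by (simp only: power2_norm_eq_inner euclidean_inner[of \<beta> \<beta>]) (simp add: power2_eq_square)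
    ultimately have "- (norm (X *v \<beta>))\<^sup>2 \<le> (\<Sum>b\<in>Basis. - (B\<^sup>2) * (\<beta> \<bullet> b)\<^sup>2)"
      by (simp add: power_mult_distrib sum_negf sum_distrib_left[symmetric])
    then have "exp (- (norm (X *v \<beta>))\<^sup>2) \<le> (\<Prod>b\<in>Basis. exp (- (B\<^sup>2) * (\<beta> \<bullet> b)\<^sup>2))"
      by (simp add: exp_sum[symmetric])
    then show ?thesis
      by (simp add: prod_ennreal ennreal_leI)
  qed
  have "(\<integral>\<^sup>+\<beta>. ennreal (exp (- (norm (X *v \<beta>))\<^sup>2)) \<partial>lborel) \<le>
        (\<integral>\<^sup>+\<beta>. (\<Prod>b\<in>Basis. ennreal (exp (- (B\<^sup>2) * (\<beta> \<bullet> b)\<^sup>2))) \<partial>(lborel :: (real^'p) measure))"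
    by (rule nn_integral_mono) (rule le)
  also have "\<dots> = (\<Prod>b\<in>(Basis :: (real^'p) set). (\<integral>\<^sup>+x. ennreal (exp (- (B\<^sup>2) * x\<^sup>2)) \<partial>lborel))"
    by (rule nn_integral_lborel_prod[where f = "\<lambda>b x. ennreal (exp (- (B\<^sup>2) * x\<^sup>2))"]) auto
  also have "(\<integral>\<^sup>+x. ennreal (exp (- (B\<^sup>2) * x\<^sup>2)) \<partial>lborel) = ennreal (sqrt (2 * pi * (1 / (2 * B\<^sup>2))))"
  proof -
    have "exp (- (B\<^sup>2) * x\<^sup>2) = exp (-(x - 0)\<^sup>2 / (2 * (1 / (2 * B\<^sup>2))))" for x
      using B(1) by (simp add: field_simps)
    then show ?thesis using gauss1[of "1 / (2 * B\<^sup>2)" 0] B(1) by (simp add: mult.commute)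
  qed
  finally have "(\<integral>\<^sup>+\<beta>. ennreal (exp (- (norm (X *v \<beta>))\<^sup>2)) \<partial>lborel) \<le> ennreal (sqrt (2 * pi * (1 / (2 * B\<^sup>2)))) ^ CARD('p)"
    by simp
  also have "\<dots> < \<infinity>" by (simp add: power_less_top_ennreal)
  finally show ?thesis .
qed

lemma gauss_vec_pos:
  fixes X :: "real^'p^'n"
  shows "(\<integral>\<^sup>+\<beta>. ennreal (exp (- (norm (X *v \<beta>))\<^sup>2)) \<partial>lborel) > 0"
  by (rule nn_integral_lborel_pos) auto

lemma gauss_vec_scale:
  fixes X :: "real^'p^'n" and m :: "real^'p" and l :: real
  assumes l: "l > 0"
  shows "(\<integral>\<^sup>+\<beta>. ennreal (exp (- l * (norm (X *v (\<beta> - m)))\<^sup>2)) \<partial>lborel)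
       = ennreal (l powr (- real CARD('p) / 2)) * (\<integral>\<^sup>+\<beta>. ennreal (exp (- (norm (X *v \<beta>))\<^sup>2)) \<partial>lborel)"
proof -
  define c where "c = 1 / sqrt l"
  have c: "c > 0" using l by (simp add: c_def)
  have "(\<integral>\<^sup>+\<beta>. ennreal (exp (- l * (norm (X *v (\<beta> - m)))\<^sup>2)) \<partial>lborel)
      = (\<integral>\<^sup>+\<beta>. ennreal (exp (- l * (norm (X *v (\<beta> - m)))\<^sup>2)) \<partial>(density (distr lborel borel (\<lambda>x. m + c *\<^sub>R x)) (\<lambda>_. \<bar>c\<bar>^DIM(real^'p))))"
    using c by (subst lborel_affine[of c m]) auto
  also have "\<dots> = ennreal (\<bar>c\<bar>^DIM(real^'p)) * (\<integral>\<^sup>+x. ennreal (exp (- l * (norm (X *v (c *\<^sub>R x)))\<^sup>2)) \<partial>lborel)"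
    by (simp add: nn_integral_density nn_integral_distr nn_integral_cmult)
  also have "(\<lambda>x. ennreal (exp (- l * (norm (X *v (c *\<^sub>R x)))\<^sup>2))) = (\<lambda>x. ennreal (exp (- (norm (X *v x))\<^sup>2)))"
  proof
    fix x :: "real^'p"
    have "l * (norm (X *v (c *\<^sub>R x)))\<^sup>2 = (l * c\<^sup>2) * (norm (X *v x))\<^sup>2"
      by (simp add: matrix_vector_mult_scaleR power_mult_distrib)
    also have "l * c\<^sup>2 = 1" using l by (simp add: c_def power_divide)
    finally show "ennreal (exp (- l * (norm (X *v (c *\<^sub>R x)))\<^sup>2)) = ennreal (exp (- (norm (X *v x))\<^sup>2))"
      by simp
  qed
  also have "\<bar>c\<bar>^DIM(real^'p) = l powr (- real CARD('p) / 2)"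
    using l c by (simp add: c_def powr_minus_divide powr_realpow[symmetric] powr_powr sqrt_def
      root_powr_inverse divide_simps powr_divide)
  finally show ?thesis .
qed


lemma range_mv_subspace:
  fixes X :: "real^'p^'n"
  shows "subspace (range (\<lambda>b. X *v b))"
  unfolding subspace_def
proof (intro conjI ballI allI)
  show "0 \<in> range ((*v) X)" by (metis matrix_vector_mult_0_right rangeI)
  fix x y assume "x \<in> range ((*v) X)" "y \<in> range ((*v) X)"
  then obtain u v where "x = X *v u" "y = X *v v" by auto
  then show "x + y \<in> range ((*v) X)" by (metis matrix_vector_right_distrib rangeI)
next
  fix c :: real and x assume "x \<in> range ((*v) X)"
  then obtain u where "x = X *v u" by auto
  then show "c *\<^sub>R x \<in> range ((*v) X)" by (metis matrix_vector_mult_scaleR rangeI)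
qed

lemma decomp_exists:
  fixes X :: "real^'p^'n" and y :: "real^'n"
  obtains c b r where "y = vec c + X *v b + r" "\<And>\<beta>. r \<bullet> (X *v \<beta>) = 0" "r \<bullet> vec 1 = 0"
proof -
  define S where "S = insert (vec 1 :: real^'n) (range (\<lambda>b. X *v b))"
  obtain u z where u: "u \<in> span S" and z: "\<And>w. w \<in> span S \<Longrightarrow> orthogonal z w" and yuz: "y = u + z"
    using orthogonal_subspace_decomp_exists[of S y] by blast
  have sp: "span (range (\<lambda>b. X *v b)) = range (\<lambda>b. X *v b)"
    using range_mv_subspace[of X] by simp
  from u obtain k where "u - k *\<^sub>R vec 1 \<in> range (\<lambda>b. X *v b)"
    unfolding S_def span_insert sp by auto
  then obtain b where b: "u - k *\<^sub>R vec 1 = X *v b" by auto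
  have u_eq: "u = vec k + X *v b"
    using b by (simp add: algebra_simps vec_eq_iff)
  show ?thesis
  proof
    show "y = vec k + X *v b + z" using yuz u_eq by simp
    show "z \<bullet> (X *v \<beta>) = 0" for \<beta>
    proof -
      have "X *v \<beta> \<in> span S" by (rule span_base) (simp add: S_def)
      then show ?thesis using z by (simp add: orthogonal_def)
    qed
    show "z \<bullet> vec 1 = 0"
    proof -
      have "vec 1 \<in> span S" by (rule span_base) (simp add: S_def)
      then show ?thesis using z by (simp add: orthogonal_def)
    qed
  qed
qed

lemma centered_orth:
  fixes X :: "real^'p^'n"
  assumes "centered_design X"
  shows "vec d \<bullet> (X *v \<beta>) = 0"
proof -
  have "vec d \<bullet> (X *v \<beta>) = (\<Sum>i\<in>UNIV. d * (\<Sum>j\<in>UNIV. X $ i $ j * \<beta> $ j))"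
    by (simp add: inner_vec_def matrix_vector_mult_def)
  also have "\<dots> = d * (\<Sum>i\<in>UNIV. \<Sum>j\<in>UNIV. X $ i $ j * \<beta> $ j)"
    by (simp add: sum_distrib_left)
  also have "\<dots> = d * (\<Sum>j\<in>UNIV. \<Sum>i\<in>UNIV. X $ i $ j * \<beta> $ j)"
    by (subst sum.swap) (rule refl)
  also have "\<dots> = d * (\<Sum>j\<in>UNIV. (\<Sum>i\<in>UNIV. X $ i $ j) * \<beta> $ j)"
    by (simp add: sum_distrib_right)
  also have "\<dots> = 0" using assms by (simp add: centered_design_def)
  finally show ?thesis .
qed

lemma norm_vec_sq: "(norm (vec d :: real^'n))\<^sup>2 = real CARD('n) * d\<^sup>2"
  by (subst power2_norm_eq_inner) (simp add: inner_vec_def power2_eq_square)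

lemma pyth:
  fixes X :: "real^'p^'n"
  assumes cen: "centered_design X" and r1: "\<And>\<beta>. r \<bullet> (X *v \<beta>) = 0" and r2: "r \<bullet> vec 1 = 0"
  shows "(norm (vec c + X *v b + r - vec \<alpha> - X *v \<beta>))\<^sup>2
       = (norm r)\<^sup>2 + real CARD('n) * (c - \<alpha>)\<^sup>2 + (norm (X *v (b - \<beta>)))\<^sup>2"
proof -
  define v where "v = (vec (c - \<alpha>) :: real^'n)"
  define w where "w = X *v (b - \<beta>)"
  have e: "vec c + X *v b + r - vec \<alpha> - X *v \<beta> = v + w + r"
    by (simp add: v_def w_def matrix_vector_mult_diff_distrib vec_eq_iff)
  have vw: "v \<bullet> w = 0" unfolding v_def w_def by (rule centered_orth[OF cen])
  have vr: "v \<bullet> r = 0"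
  proof -
    have "v = (c - \<alpha>) *\<^sub>R vec 1" by (simp add: v_def vec_eq_iff)
    then show ?thesis using r2 by (simp add: inner_commute)
  qed
  have wr: "w \<bullet> r = 0" unfolding w_def using r1 by (simp add: inner_commute)
  have n3: "(norm (v + w + r))\<^sup>2 = (norm v)\<^sup>2 + (norm w)\<^sup>2 + (norm r)\<^sup>2"
  proof -
    have "orthogonal (v + w) r" using vr wr by (simp add: orthogonal_def inner_add_left)
    then have "(norm (v + w + r))\<^sup>2 = (norm (v + w))\<^sup>2 + (norm r)\<^sup>2" by (rule norm_add_Pythagorean)
    moreover have "(norm (v + w))\<^sup>2 = (norm v)\<^sup>2 + (norm w)\<^sup>2"
      using vw by (intro norm_add_Pythagorean) (simp add: orthogonal_def)
    ultimately show ?thesis by simp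
  qed
  have nv: "(norm v)\<^sup>2 = real CARD('n) * (c - \<alpha>)\<^sup>2" unfolding v_def by (rule norm_vec_sq)
  have "(norm (vec c + X *v b + r - vec \<alpha> - X *v \<beta>))\<^sup>2 = (norm (v + w + r))\<^sup>2" by (simp only: e)
  also have "\<dots> = (norm v)\<^sup>2 + (norm w)\<^sup>2 + (norm r)\<^sup>2" by (rule n3)
  also have "\<dots> = (norm r)\<^sup>2 + (norm v)\<^sup>2 + (norm w)\<^sup>2" by (simp only: add_ac)
  finally show ?thesis unfolding nv w_def .
qed

lemma sigma_hat2_eq:
  fixes X :: "real^'p^'n"
  assumes cen: "centered_design X" and y: "y = vec c + X *v b + r"
    and r1: "\<And>\<beta>. r \<bullet> (X *v \<beta>) = 0" and r2: "r \<bullet> vec 1 = 0"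
  shows "sigma_hat2 X y = (norm r)\<^sup>2 / (real CARD('n) - real CARD('p) - 1)"
proof -
  have ge: "(norm r)\<^sup>2 \<le> (norm (y - vec \<alpha> - X *v \<beta>))\<^sup>2" for \<alpha> \<beta>
    unfolding y pyth[OF cen r1 r2] by simp
  have at: "(norm (y - vec c - X *v b))\<^sup>2 = (norm r)\<^sup>2"
    unfolding y pyth[OF cen r1 r2] by simp
  have ls: "is_LS X y (c, b)" unfolding is_LS_def using ge at by simp
  then have "is_LS X y (LS_estimate X y)" unfolding LS_estimate_def by (rule someI)
  then have "(norm (y - vec (fst (LS_estimate X y)) - X *v snd (LS_estimate X y)))\<^sup>2 \<le> (norm (y - vec c - X *v b))\<^sup>2"
    unfolding is_LS_def by blast
  then have "(norm (y - vec (fst (LS_estimate X y)) - X *v snd (LS_estimate X y)))\<^sup>2 = (norm r)\<^sup>2"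
    using ge at by (intro order.antisym) auto
  then show ?thesis
    unfolding sigma_hat2_def Let_def by (simp only: case_prod_beta)
qed


lemma matrix_inv_eqI:
  fixes A B :: "real^'n^'n"
  assumes AB: "A ** B = mat 1" and BA: "B ** A = mat 1"
  shows "matrix_inv A = B"
proof -
  have ex: "\<exists>B'. A ** B' = mat 1 \<and> B' ** A = mat 1" using AB BA by blast
  define B' where "B' = matrix_inv A"
  have B': "A ** B' = mat 1" "B' ** A = mat 1"
    unfolding B'_def matrix_inv_def using someI_ex[OF ex] by auto
  have "B' = B' ** (A ** B)" using AB by simp
  also have "\<dots> = (B' ** A) ** B" by (rule matrix_mul_assoc)
  also have "\<dots> = B" using B' by simp
  finally show ?thesis unfolding B'_def .
qed

lemma quad_form:
  fixes X :: "real^'p^'n"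
  shows "\<beta> \<bullet> ((transpose X ** X) *v \<beta>) = (norm (X *v \<beta>))\<^sup>2"
proof -
  have "(transpose X ** X) *v \<beta> = transpose X *v (X *v \<beta>)" by (simp add: matrix_vector_mul_assoc)
  also have "\<dots> = (X *v \<beta>) v* X" by simp
  finally have "\<beta> \<bullet> ((transpose X ** X) *v \<beta>) = ((X *v \<beta>) v* X) \<bullet> \<beta>" by (simp add: inner_commute)
  also have "\<dots> = (X *v \<beta>) \<bullet> (X *v \<beta>)" by (rule dot_lmul_matrix)
  finally show ?thesis by (simp add: power2_norm_eq_inner)
qed

lemma inj_mv_iff0:
  fixes A :: "real^'p^'n"
  shows "inj ((*v) A) \<longleftrightarrow> (\<forall>x. A *v x = 0 \<longrightarrow> x = 0)"
  using linear_inj_iff_eq_0[OF matrix_vector_mul_linear[of A]] by simp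

lemma gram_inj:
  fixes X :: "real^'p^'n"
  assumes inj: "inj ((*v) X)"
  shows "inj ((*v) (transpose X ** X))"
  unfolding inj_mv_iff0
proof (intro allI impI)
  fix x assume "(transpose X ** X) *v x = 0"
  then have "(norm (X *v x))\<^sup>2 = 0" using quad_form[of x X] by simp
  then have "X *v x = 0" by simp
  then show "x = 0" using inj unfolding inj_mv_iff0 by blast
qed

lemma inj_invertible:
  fixes A :: "real^'p^'p"
  assumes "inj ((*v) A)"
  shows "invertible A"
  using assms invertible_left_inverse matrix_left_invertible_injective by blast

lemma det_scaleR_mat:
  fixes A :: "real^'n^'n"
  shows "det (c *\<^sub>R A) = c ^ CARD('n) * det A"
  unfolding det_def
  by (simp add: prod.distrib sum_distrib_left mult_ac)

lemma det_gram_pos: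
  fixes X :: "real^'p^'n"
  assumes inj: "inj ((*v) X)"
  shows "det (transpose X ** X) > 0"
proof (rule ccontr)
  define M where "M = transpose X ** X"
  define Mt where "Mt t = t *\<^sub>R (mat 1 :: real^'p^'p) + (1 - t) *\<^sub>R M" for t :: real
  assume "\<not> det (transpose X ** X) > 0"
  then have le: "det (Mt 0) \<le> 0" by (simp add: Mt_def M_def)
  have one: "det (Mt 1) = 1" by (simp add: Mt_def)
  have cont: "continuous_on {0..1} (\<lambda>t. det (Mt t))"
    unfolding det_def Mt_def by (intro continuous_intros) 
  obtain t where t: "0 \<le> t" "t \<le> 1" "det (Mt t) = 0"
    using IVT'[of "\<lambda>t. det (Mt t)" 0 0 1] le one cont by auto
  have "inj ((*v) (Mt t))"
    unfolding inj_mv_iff0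
  proof (intro allI impI)
    fix x assume x0: "Mt t *v x = 0"
    have "x \<bullet> (Mt t *v x) = t * (norm x)\<^sup>2 + (1 - t) * (norm (X *v x))\<^sup>2"
      using quad_form[of x X]
      by (simp add: Mt_def M_def matrix_vector_mult_add_rdistrib inner_add_right
          scaleR_matrix_vector_assoc[symmetric] power2_norm_eq_inner)
    then have e: "t * (norm x)\<^sup>2 + (1 - t) * (norm (X *v x))\<^sup>2 = 0" using x0 by simp
    have "t * (norm x)\<^sup>2 \<ge> 0" "(1 - t) * (norm (X *v x))\<^sup>2 \<ge> 0" using t by auto
    then have "t * (norm x)\<^sup>2 = 0" "(1 - t) * (norm (X *v x))\<^sup>2 = 0" using e by linarith+
    show "x = 0"
    proof (cases "t = 0")
      case True
      then have "X *v x = 0" using \<open>(1 - t) * (norm (X *v x))\<^sup>2 = 0\<close> by simp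
      then show ?thesis using inj unfolding inj_mv_iff0 by blast
    next
      case False
      then show ?thesis using \<open>t * (norm x)\<^sup>2 = 0\<close> by simp
    qed
  qed
  then have "det (Mt t) \<noteq> 0" using inj_invertible invertible_det_nz by blast
  with t show False by simp
qed


lemma gram_inv:
  fixes X :: "real^'p^'n"
  assumes inj: "inj ((*v) X)"
  shows "(transpose X ** X) ** matrix_inv (transpose X ** X) = mat 1"
    "matrix_inv (transpose X ** X) ** (transpose X ** X) = mat 1"
proof -
  have "invertible (transpose X ** X)" by (rule inj_invertible[OF gram_inj[OF inj]])
  then have ex: "\<exists>B. (transpose X ** X) ** B = mat 1 \<and> B ** (transpose X ** X) = mat 1"
    unfolding invertible_def by blast
  show "(transpose X ** X) ** matrix_inv (transpose X ** X) = mat 1"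
    "matrix_inv (transpose X ** X) ** (transpose X ** X) = mat 1"
    unfolding matrix_inv_def using someI_ex[OF ex] by auto
qed

lemma mvn_formula:
  fixes X :: "real^'p^'n"
  assumes inj: "inj ((*v) X)" and c: "c > 0"
  shows "mvn_density 0 (c *\<^sub>R matrix_inv (transpose X ** X)) \<beta>
       = (2 * pi) powr (- real CARD('p) / 2) * sqrt (det (transpose X ** X)) * c powr (- real CARD('p) / 2)
         * exp (- (norm (X *v \<beta>))\<^sup>2 / (2 * c))"
proof -
  define M where "M = transpose X ** X"
  define Mi where "Mi = matrix_inv M"
  have MMi: "M ** Mi = mat 1" "Mi ** M = mat 1" using gram_inv[OF inj] by (simp_all add: M_def Mi_def)
  have dM: "det M > 0" unfolding M_def by (rule det_gram_pos[OF inj])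
  have inv: "matrix_inv (c *\<^sub>R Mi) = (1 / c) *\<^sub>R M"
  proof (rule matrix_inv_eqI)
    show "c *\<^sub>R Mi ** (1 / c) *\<^sub>R M = mat 1"
      using c MMi by (simp add: matrix_scalar_ac scalar_matrix_assoc[symmetric])
    show "(1 / c) *\<^sub>R M ** c *\<^sub>R Mi = mat 1"
      using c MMi by (simp add: matrix_scalar_ac scalar_matrix_assoc[symmetric])
  qed
  have "det M * det Mi = 1" using MMi by (metis det_I det_mul)
  then have dMi: "det Mi = 1 / det M" using dM by (simp add: field_simps)
  have dcMi: "det (c *\<^sub>R Mi) = c ^ CARD('p) / det M"
    by (simp add: det_scaleR_mat dMi)
  have sq: "sqrt (det (c *\<^sub>R Mi)) = c powr (real CARD('p) / 2) / sqrt (det M)"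
    using c dM by (simp add: dcMi real_sqrt_divide sqrt_def root_powr_inverse powr_realpow[symmetric] powr_powr powr_divide)
  have q: "(\<beta> - 0) \<bullet> (matrix_inv (c *\<^sub>R Mi) *v (\<beta> - 0)) = (norm (X *v \<beta>))\<^sup>2 / c"
    unfolding inv using quad_form[of \<beta> X]
    by (simp add: M_def scaleR_matrix_vector_assoc[symmetric])
  have "mvn_density 0 (c *\<^sub>R Mi) \<beta> = (2 * pi) powr (- real CARD('p) / 2) /
          (c powr (real CARD('p) / 2) / sqrt (det M)) * exp (- (1/2) * ((norm (X *v \<beta>))\<^sup>2 / c))"
    unfolding mvn_density_def sq q ..
  also have "\<dots> = (2 * pi) powr (- real CARD('p) / 2) * sqrt (det M) * c powr (- real CARD('p) / 2)
         * exp (- (norm (X *v \<beta>))\<^sup>2 / (2 * c))"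
    using c by (simp add: powr_minus divide_simps mult_ac)
  finally show ?thesis by (simp add: M_def Mi_def)
qed

definition K1 :: "real^'p^'n \<Rightarrow> real \<Rightarrow> real" where
  "K1 X a = (2 * pi) powr (- real CARD('n) / 2) * (2 * pi) powr (- real CARD('p) / 2)
     * sqrt (det (transpose X ** X)) * ((a - 2) / 2)"

lemma joint_formula:
  fixes X :: "real^'p^'n"
  assumes inj: "inj ((*v) X)" and cen: "centered_design X"
    and y: "y = vec c + X *v b + r" and r1: "\<And>\<beta>. r \<bullet> (X *v \<beta>) = 0" and r2: "r \<bullet> vec 1 = 0"
    and g: "g > 0" and s: "s > 0"
  shows "likelihood X y \<alpha> \<beta> s * (1 / s) * mvn_density 0 ((g * s) *\<^sub>R matrix_inv (transpose X ** X)) \<beta>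
           * hyper_g_density a g
       = exp (- (real CARD('n) * (c - \<alpha>)\<^sup>2) / (2 * s)) *
         (K1 X a * s powr (- real CARD('n) / 2 - 1 - real CARD('p) / 2) * exp (- (norm r)\<^sup>2 / (2 * s))
          * g powr (- real CARD('p) / 2) * (1 + g) powr (- a / 2)
          * exp (- ((norm (X *v (b - \<beta>)))\<^sup>2 / (2 * s) + (norm (X *v \<beta>))\<^sup>2 / (2 * (g * s)))))"
proof -
  define n where "n = real CARD('n)"
  define p where "p = real CARD('p)"
  define R where "R = (norm r)\<^sup>2"
  define Q1 where "Q1 = (norm (X *v (b - \<beta>)))\<^sup>2"
  define Q2 where "Q2 = (norm (X *v \<beta>))\<^sup>2"
  define E1 where "E1 = exp (- (n * (c - \<alpha>)\<^sup>2) / (2 * s))"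
  have L: "likelihood X y \<alpha> \<beta> s = (2 * pi) powr (- n / 2) * s powr (- n / 2) * exp (- R / (2 * s)) * E1 * exp (- Q1 / (2 * s))"
  proof -
    have "(norm (y - vec \<alpha> - X *v \<beta>))\<^sup>2 = R + n * (c - \<alpha>)\<^sup>2 + Q1"
      unfolding y R_def n_def Q1_def by (rule pyth[OF cen r1 r2])
    then have "exp (- (norm (y - vec \<alpha> - X *v \<beta>))\<^sup>2 / (2 * s)) = exp (- R / (2 * s)) * E1 * exp (- Q1 / (2 * s))"
      unfolding E1_def by (simp add: exp_add[symmetric] add_divide_distrib diff_divide_distrib)
    moreover have "(2 * pi * s) powr (- n / 2) = (2 * pi) powr (- n / 2) * s powr (- n / 2)"
      using s by (simp add: powr_mult)
    ultimately show ?thesis unfolding likelihood_def n_def by (simp add: mult.assoc)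
  qed
  have MV: "mvn_density 0 ((g * s) *\<^sub>R matrix_inv (transpose X ** X)) \<beta>
      = (2 * pi) powr (- p / 2) * sqrt (det (transpose X ** X)) * (g powr (- p / 2) * s powr (- p / 2))
         * exp (- Q2 / (2 * (g * s)))"
    unfolding mvn_formula[OF inj mult_pos_pos[OF g s]] p_def Q2_def
    using g s by (simp add: powr_mult)
  have H: "hyper_g_density a g = (a - 2) / 2 * (1 + g) powr (- a / 2)" by (simp add: hyper_g_density_def)
  have S: "s powr (- n / 2 - 1 - p / 2) = s powr (- n / 2) * (1 / s) * s powr (- p / 2)"
  proof -
    have "s powr (- n / 2 - 1 - p / 2) = s powr (- n / 2 + (-1) + (- p / 2))" by (rule arg_cong[where f="\<lambda>e. s powr e"]) simp
    also have "\<dots> = s powr (- n / 2) * s powr (-1) * s powr (- p / 2)" using s by (simp only: powr_add)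
    also have "s powr (-1) = 1 / s" using s by (simp add: powr_minus_divide)
    finally show ?thesis .
  qed
  have EE: "exp (- (Q1 / (2 * s) + Q2 / (2 * (g * s)))) = exp (- Q1 / (2 * s)) * exp (- Q2 / (2 * (g * s)))"
    by (simp add: exp_add[symmetric])
  show ?thesis
    unfolding L MV H K1_def n_def[symmetric] p_def[symmetric] R_def[symmetric] Q1_def[symmetric]
      Q2_def[symmetric] E1_def[symmetric] S EE
    by (simp only: mult_ac)
qed


lemma sq_complete:
  fixes X :: "real^'p^'n"
  assumes g: "g > 0" and s: "s > 0"
  shows "(norm (X *v (b - \<beta>)))\<^sup>2 / (2 * s) + (norm (X *v \<beta>))\<^sup>2 / (2 * (g * s))
       = ((1 + g) / (2 * g * s)) * (norm (X *v (\<beta> - (g / (1 + g)) *\<^sub>R b)))\<^sup>2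
         + (norm (X *v b))\<^sup>2 / (2 * s * (1 + g))"
proof -
  define u where "u = X *v \<beta>"
  define v where "v = X *v b"
  define k where "k = g / (1 + g)"
  have e1: "X *v (b - \<beta>) = v - u" by (simp add: u_def v_def matrix_vector_mult_diff_distrib)
  have e2: "X *v (\<beta> - k *\<^sub>R b) = u - k *\<^sub>R v"
    by (simp add: u_def v_def matrix_vector_mult_diff_distrib matrix_vector_mult_scaleR)
  define A where "A = u \<bullet> u"
  define B where "B = u \<bullet> v"
  define C where "C = v \<bullet> v"
  have n1: "(norm (v - u))\<^sup>2 = C - 2 * B + A"
    by (simp add: power2_norm_eq_inner inner_diff_left inner_diff_right A_def B_def C_def inner_commute)
  have n2: "(norm (u - k *\<^sub>R v))\<^sup>2 = A - 2 * k * B + k\<^sup>2 * C"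
    by (subst power2_norm_eq_inner) (simp add: inner_diff_left inner_diff_right A_def B_def C_def inner_commute power2_eq_square algebra_simps)
  have n3: "(norm u)\<^sup>2 = A" "(norm v)\<^sup>2 = C" by (simp_all add: power2_norm_eq_inner A_def C_def)
  show ?thesis
    unfolding e1 e2[unfolded k_def] n1 n2[unfolded k_def] n3 u_def[symmetric] v_def[symmetric]
  proof -
    have g1: "1 + g > 0" using g by simp
    define D where "D = 2 * g * s * (1 + g)"
    have D: "D > 0" using g s g1 by (simp add: D_def)
    have l: "((C - 2 * B + A) / (2 * s) + A / (2 * (g * s))) * D = g * (1 + g) * (C - 2 * B + A) + (1 + g) * A"
      using g s g1 by (simp add: D_def field_simps)
    have r: "((1 + g) / (2 * g * s) * (A - 2 * (g / (1 + g)) * B + (g / (1 + g))\<^sup>2 * C) + C / (2 * s * (1 + g))) * D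
       = (1 + g)\<^sup>2 * A - 2 * g * (1 + g) * B + g\<^sup>2 * C + g * C"
    proof -
      have d1: "(1 + g) / (2 * g * s) * D = (1 + g)\<^sup>2" using g s g1 by (simp add: D_def power2_eq_square)
      have d2: "C / (2 * s * (1 + g)) * D = g * C" using g s g1 by (simp add: D_def)
      have k1: "(1 + g)\<^sup>2 * (g / (1 + g)) = g * (1 + g)" using g1 by (simp add: power2_eq_square)
      have k2: "(1 + g)\<^sup>2 * (g / (1 + g))\<^sup>2 = g\<^sup>2" using g1 by (simp add: power_divide)
      have "((1 + g) / (2 * g * s) * (A - 2 * (g / (1 + g)) * B + (g / (1 + g))\<^sup>2 * C) + C / (2 * s * (1 + g))) * D
          = ((1 + g) / (2 * g * s) * D) * (A - 2 * (g / (1 + g)) * B + (g / (1 + g))\<^sup>2 * C) + C / (2 * s * (1 + g)) * D"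
        unfolding distrib_right by (simp only: mult_ac)
      also have "\<dots> = (1 + g)\<^sup>2 * A - 2 * ((1 + g)\<^sup>2 * (g / (1 + g))) * B + ((1 + g)\<^sup>2 * (g / (1 + g))\<^sup>2) * C + g * C"
        unfolding d1 d2 by (simp only: right_diff_distrib distrib_left mult_ac)
      also have "\<dots> = (1 + g)\<^sup>2 * A - 2 * g * (1 + g) * B + g\<^sup>2 * C + g * C"
        unfolding k1 k2 by (simp only: mult_ac)
      finally show ?thesis .
    qed
    have "g * (1 + g) * (C - 2 * B + A) + (1 + g) * A = (1 + g)\<^sup>2 * A - 2 * g * (1 + g) * B + g\<^sup>2 * C + g * C"
      by (simp add: algebra_simps power2_eq_square)
    then have "((C - 2 * B + A) / (2 * s) + A / (2 * (g * s))) * D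
        = ((1 + g) / (2 * g * s) * (A - 2 * (g / (1 + g)) * B + (g / (1 + g))\<^sup>2 * C) + C / (2 * s * (1 + g))) * D"
      using l r by simp
    then show "(C - 2 * B + A) / (2 * s) + A / (2 * (g * s))
        = ((1 + g) / (2 * g * s)) * (A - 2 * (g / (1 + g)) * B + (g / (1 + g))\<^sup>2 * C) + C / (2 * s * (1 + g))"
      using D by (subst (asm) mult_right_cancel) auto
  qed
qed

definition GX :: "real^'p^'n \<Rightarrow> ennreal" where
  "GX X = (\<integral>\<^sup>+\<beta>. ennreal (exp (- (norm (X *v \<beta>))\<^sup>2)) \<partial>lborel)"

lemma beta_integral:
  fixes X :: "real^'p^'n"
  assumes g: "g > 0" and s: "s > 0"
  shows "(\<integral>\<^sup>+\<beta>. ennreal (exp (- ((norm (X *v (b - \<beta>)))\<^sup>2 / (2 * s) + (norm (X *v \<beta>))\<^sup>2 / (2 * (g * s))))) \<partial>lborel)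
       = ennreal (exp (- (norm (X *v b))\<^sup>2 / (2 * s * (1 + g))) * ((1 + g) / (2 * g * s)) powr (- real CARD('p) / 2)) * GX X"
proof -
  define l where "l = (1 + g) / (2 * g * s)"
  define m where "m = (g / (1 + g)) *\<^sub>R b"
  define Q where "Q = (norm (X *v b))\<^sup>2 / (2 * s * (1 + g))"
  have l: "l > 0" using g s by (simp add: l_def)
  have e: "ennreal (exp (- ((norm (X *v (b - \<beta>)))\<^sup>2 / (2 * s) + (norm (X *v \<beta>))\<^sup>2 / (2 * (g * s)))))
      = ennreal (exp (- Q)) * ennreal (exp (- l * (norm (X *v (\<beta> - m)))\<^sup>2))" for \<beta>
    unfolding sq_complete[OF g s] l_def[symmetric] m_def[symmetric] Q_def[symmetric]
    by (simp add: ennreal_mult[symmetric] exp_add[symmetric])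
  have "(\<integral>\<^sup>+\<beta>. ennreal (exp (- ((norm (X *v (b - \<beta>)))\<^sup>2 / (2 * s) + (norm (X *v \<beta>))\<^sup>2 / (2 * (g * s))))) \<partial>lborel)
      = ennreal (exp (- Q)) * (\<integral>\<^sup>+\<beta>. ennreal (exp (- l * (norm (X *v (\<beta> - m)))\<^sup>2)) \<partial>lborel)"
    unfolding e by (rule nn_integral_cmult) measurable
  also have "\<dots> = ennreal (exp (- Q)) * (ennreal (l powr (- real CARD('p) / 2)) * GX X)"
    unfolding GX_def by (subst gauss_vec_scale[OF l]) (rule refl)
  finally show ?thesis
    by (simp add: Q_def l_def ennreal_mult mult.assoc)
qed

definition Wf :: "real^'p^'n \<Rightarrow> real \<Rightarrow> real^'p \<Rightarrow> real \<Rightarrow> real \<Rightarrow> real^'p \<Rightarrow> real \<Rightarrow> ennreal" where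
  "Wf X a b R s \<beta> g = indicator {0<..} g * ennreal (K1 X a * s powr (- real CARD('n) / 2 - 1 - real CARD('p) / 2)
     * exp (- R / (2 * s)) * g powr (- real CARD('p) / 2) * (1 + g) powr (- a / 2)
     * exp (- ((norm (X *v (b - \<beta>)))\<^sup>2 / (2 * s) + (norm (X *v \<beta>))\<^sup>2 / (2 * (g * s)))))"

definition Vg :: "real^'p^'n \<Rightarrow> real \<Rightarrow> real^'p \<Rightarrow> real \<Rightarrow> real \<Rightarrow> real \<Rightarrow> ennreal" where
  "Vg X a b R s g = indicator {0<..} g * ennreal (K1 X a * 2 powr (real CARD('p) / 2) * s powr (- real CARD('n) / 2 - 1)
     * exp (- R / (2 * s)) * (1 + g) powr (- (a + real CARD('p)) / 2)
     * exp (- (norm (X *v b))\<^sup>2 / (2 * s * (1 + g)))) * GX X"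

lemma Wf_measurable[measurable]:
  fixes X :: "real^'p^'n"
  shows "(\<lambda>x. Wf X a b R s (fst x) (snd x)) \<in> borel_measurable (lborel \<Otimes>\<^sub>M lborel)"
  unfolding Wf_def by measurable

lemma Wf_measurable_g[measurable]:
  fixes X :: "real^'p^'n"
  shows "Wf X a b R s \<beta> \<in> borel_measurable borel"
proof -
  have "(\<lambda>g. Wf X a b R s \<beta> g) \<in> borel_measurable borel" unfolding Wf_def by measurable
  then show ?thesis by simp
qed

lemma W_beta_integral:
  fixes X :: "real^'p^'n"
  assumes K: "K1 X a \<ge> 0" and s: "s > 0"
  shows "(\<integral>\<^sup>+\<beta>. Wf X a b R s \<beta> g \<partial>lborel) = Vg X a b R s g"
proof (cases "g > 0")
  case False
  then show ?thesis by (simp add: Wf_def Vg_def)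
next
  case g: True
  define p where "p = real CARD('p)"
  define n where "n = real CARD('n)"
  define C where "C = K1 X a * s powr (- n / 2 - 1 - p / 2) * exp (- R / (2 * s)) * g powr (- p / 2) * (1 + g) powr (- a / 2)"
  have C: "C \<ge> 0" using K by (simp add: C_def)
  have e: "Wf X a b R s \<beta> g = ennreal C * ennreal (exp (- ((norm (X *v (b - \<beta>)))\<^sup>2 / (2 * s) + (norm (X *v \<beta>))\<^sup>2 / (2 * (g * s)))))" for \<beta>
    using g C by (simp add: Wf_def C_def n_def p_def ennreal_mult)
  have "(\<integral>\<^sup>+\<beta>. Wf X a b R s \<beta> g \<partial>lborel)
      = ennreal C * (\<integral>\<^sup>+\<beta>. ennreal (exp (- ((norm (X *v (b - \<beta>)))\<^sup>2 / (2 * s) + (norm (X *v \<beta>))\<^sup>2 / (2 * (g * s))))) \<partial>lborel)"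
    unfolding e by (rule nn_integral_cmult) measurable
  also have "\<dots> = ennreal C * (ennreal (exp (- (norm (X *v b))\<^sup>2 / (2 * s * (1 + g))) * ((1 + g) / (2 * g * s)) powr (- p / 2)) * GX X)"
    unfolding p_def by (subst beta_integral[OF g s]) (rule refl)
  also have cpeq: "C * ((1 + g) / (2 * g * s)) powr (- p / 2)
      = K1 X a * 2 powr (p / 2) * s powr (- n / 2 - 1) * exp (- R / (2 * s)) * (1 + g) powr (- (a + p) / 2)"
  proof -
    have f1: "((1 + g) / (2 * g * s)) powr (- p / 2) = (1 + g) powr (- p / 2) * (2 powr (p / 2) * s powr (p / 2)) * g powr (p / 2)"
      using g s by (simp add: powr_divide powr_mult powr_minus divide_simps)
    have f2: "g powr (- p / 2) * g powr (p / 2) = 1" using g by (simp add: powr_minus)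
    have f3: "(1 + g) powr (- a / 2) * (1 + g) powr (- p / 2) = (1 + g) powr (- (a + p) / 2)"
    proof -
      have "(1 + g) powr (- (a + p) / 2) = (1 + g) powr (- a / 2 + - p / 2)" by (simp add: field_simps)
      also have "\<dots> = (1 + g) powr (- a / 2) * (1 + g) powr (- p / 2)" by (rule powr_add)
      finally show ?thesis by simp
    qed
    have f4: "s powr (- n / 2 - 1 - p / 2) * s powr (p / 2) = s powr (- n / 2 - 1)"
    proof -
      have "s powr (- n / 2 - 1) = s powr ((- n / 2 - 1 - p / 2) + p / 2)" by simp
      also have "\<dots> = s powr (- n / 2 - 1 - p / 2) * s powr (p / 2)" by (rule powr_add)
      finally show ?thesis by simp
    qed
    have "C * ((1 + g) / (2 * g * s)) powr (- p / 2) = K1 X a * 2 powr (p / 2) * (s powr (- n / 2 - 1 - p / 2) * s powr (p / 2))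
        * exp (- R / (2 * s)) * (g powr (- p / 2) * g powr (p / 2)) * ((1 + g) powr (- a / 2) * (1 + g) powr (- p / 2))"
      unfolding C_def f1 by (simp only: mult_ac)
    then show ?thesis unfolding f2 f3 f4 by simp
  qed
  then have "ennreal C * (ennreal (exp (- (norm (X *v b))\<^sup>2 / (2 * s * (1 + g))) * ((1 + g) / (2 * g * s)) powr (- p / 2)) * GX X)
      = ennreal (K1 X a * 2 powr (p / 2) * s powr (- n / 2 - 1) * exp (- R / (2 * s)) * (1 + g) powr (- (a + p) / 2)
         * exp (- (norm (X *v b))\<^sup>2 / (2 * s * (1 + g)))) * GX X"
  proof -
    define E where "E = exp (- (norm (X *v b))\<^sup>2 / (2 * s * (1 + g)))"
    define P where "P = ((1 + g) / (2 * g * s)) powr (- p / 2)"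
    have EP: "E * P \<ge> 0" by (simp add: E_def P_def)
    have s1: "ennreal C * (ennreal (E * P) * GX X) = ennreal (C * (E * P)) * GX X"
      using C EP by (simp add: ennreal_mult mult.assoc)
    have s2: "C * (E * P) = (C * P) * E" by (simp only: mult_ac)
    show ?thesis using s1 unfolding s2 unfolding P_def cpeq unfolding E_def .
  qed
  finally show ?thesis using g by (simp add: Vg_def n_def p_def)
qed

lemma marginal_formula:
  fixes X :: "real^'p^'n"
  assumes inj: "inj ((*v) X)" and cen: "centered_design X"
    and y: "y = vec c + X *v b + r" and r1: "\<And>\<beta>. r \<bullet> (X *v \<beta>) = 0" and r2: "r \<bullet> vec 1 = 0"
    and K: "K1 X a \<ge> 0" and s: "s > 0"
  shows "sigma2_post_unnorm X a y s
       = ennreal (sqrt (2 * pi * (s / real CARD('n)))) * (\<integral>\<^sup>+g. Vg X a b ((norm r)\<^sup>2) s g \<partial>lborel)"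
proof -
  define n where "n = real CARD('n)"
  have n: "n > 0" by (simp add: n_def)
  define R where "R = (norm r)\<^sup>2"
  define E where "E \<alpha> = ennreal (exp (- (\<alpha> - c)\<^sup>2 / (2 * (s / n))))" for \<alpha>
  have pt: "indicator {0<..} g * joint_post X a y \<alpha> \<beta> g s = E \<alpha> * Wf X a b R s \<beta> g" for \<alpha> \<beta> g
  proof (cases "g > 0")
    case False
    then show ?thesis by (simp add: Wf_def)
  next
    case g: True
    have ee: "exp (- (n * (c - \<alpha>)\<^sup>2) / (2 * s)) = exp (- (\<alpha> - c)\<^sup>2 / (2 * (s / n)))"
      using n s by (simp add: power2_commute field_simps)
    define Z where "Z = K1 X a * s powr (- real CARD('n) / 2 - 1 - real CARD('p) / 2) * exp (- (norm r)\<^sup>2 / (2 * s))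
          * g powr (- real CARD('p) / 2) * (1 + g) powr (- a / 2)
          * exp (- ((norm (X *v (b - \<beta>)))\<^sup>2 / (2 * s) + (norm (X *v \<beta>))\<^sup>2 / (2 * (g * s))))"
    have Z: "Z \<ge> 0" using K by (simp add: Z_def)
    have "joint_post X a y \<alpha> \<beta> g s = ennreal (exp (- (n * (c - \<alpha>)\<^sup>2) / (2 * s)) * Z)"
      unfolding joint_post_def joint_formula[OF inj cen y r1 r2 g s] Z_def n_def by (rule refl)
    also have "\<dots> = E \<alpha> * ennreal Z" unfolding ee E_def using Z by (simp add: ennreal_mult)
    finally show ?thesis using g by (simp add: Wf_def Z_def R_def)
  qed
  have "sigma2_post_unnorm X a y s = (\<integral>\<^sup>+\<alpha>. \<integral>\<^sup>+\<beta>. \<integral>\<^sup>+g. E \<alpha> * Wf X a b R s \<beta> g \<partial>lborel \<partial>lborel \<partial>lborel)"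
    using s unfolding sigma2_post_unnorm_def pt by simp
  also have "\<dots> = (\<integral>\<^sup>+\<alpha>. E \<alpha> * (\<integral>\<^sup>+\<beta>. \<integral>\<^sup>+g. Wf X a b R s \<beta> g \<partial>lborel \<partial>lborel) \<partial>lborel)"
  proof (rule nn_integral_cong)
    fix \<alpha>
    have "(\<integral>\<^sup>+\<beta>. \<integral>\<^sup>+g. E \<alpha> * Wf X a b R s \<beta> g \<partial>lborel \<partial>lborel) = (\<integral>\<^sup>+\<beta>. E \<alpha> * \<integral>\<^sup>+g. Wf X a b R s \<beta> g \<partial>lborel \<partial>lborel)"
      by (rule nn_integral_cong) (rule nn_integral_cmult, measurable)
    also have "\<dots> = E \<alpha> * (\<integral>\<^sup>+\<beta>. \<integral>\<^sup>+g. Wf X a b R s \<beta> g \<partial>lborel \<partial>lborel)"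
      by (rule nn_integral_cmult) measurable
    finally show "(\<integral>\<^sup>+\<beta>. \<integral>\<^sup>+g. E \<alpha> * Wf X a b R s \<beta> g \<partial>lborel \<partial>lborel) = E \<alpha> * (\<integral>\<^sup>+\<beta>. \<integral>\<^sup>+g. Wf X a b R s \<beta> g \<partial>lborel \<partial>lborel)" .
  qed
  also have "\<dots> = (\<integral>\<^sup>+\<alpha>. E \<alpha> \<partial>lborel) * (\<integral>\<^sup>+\<beta>. \<integral>\<^sup>+g. Wf X a b R s \<beta> g \<partial>lborel \<partial>lborel)"
    by (rule nn_integral_multc) (simp add: E_def)
  also have "(\<integral>\<^sup>+\<beta>. \<integral>\<^sup>+g. Wf X a b R s \<beta> g \<partial>lborel \<partial>lborel) = (\<integral>\<^sup>+g. \<integral>\<^sup>+\<beta>. Wf X a b R s \<beta> g \<partial>lborel \<partial>lborel)"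
    by (rule lborel_pair.Fubini'[symmetric]) (simp add: case_prod_beta')
  also have "\<dots> = (\<integral>\<^sup>+g. Vg X a b R s g \<partial>lborel)"
    by (intro nn_integral_cong W_beta_integral[OF K s])
  also have "(\<integral>\<^sup>+\<alpha>. E \<alpha> \<partial>lborel) = ennreal (sqrt (2 * pi * (s / n)))"
    unfolding E_def by (rule gauss1) (use s n in simp)
  finally show ?thesis by (simp add: n_def R_def)
qed


definition Jf :: "real \<Rightarrow> real \<Rightarrow> real \<Rightarrow> ennreal" where
  "Jf d s q = (\<integral>\<^sup>+t. ennreal (t powr (- d) * exp (- 1 / (2 * s * t))) * indicator {1/q<..} t \<partial>lborel)"

definition Jinf :: "real \<Rightarrow> real \<Rightarrow> ennreal" where
  "Jinf d s = (\<integral>\<^sup>+t. ennreal (t powr (- d) * exp (- 1 / (2 * s * t))) * indicator {0<..} t \<partial>lborel)"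

lemma Jinf_eq:
  assumes s: "s > 0" and d: "d > 1"
  shows "Jinf d s = ennreal ((2 * s) powr (d - 1) * Gamma (d - 1))"
proof -
  have e: "t powr (- d) * exp (- 1 / (2 * s * t)) = t powr (- ((d - 1) + 1)) * exp (- (1 / (2 * s)) / t)" for t
    by simp
  have "Jinf d s = ennreal ((1 / (2 * s)) powr (- (d - 1)) * Gamma (d - 1))"
    unfolding Jinf_def e by (rule inv_gamma_integral) (use s d in auto)
  also have "(1 / (2 * s)) powr (- (d - 1)) = (2 * s) powr (d - 1)"
    using s by (simp only: powr_minus) (simp add: powr_divide)
  finally show ?thesis .
qed

lemma Jf_le:
  assumes q: "q > 0"
  shows "Jf d s q \<le> Jinf d s"
  unfolding Jf_def Jinf_def
proof (intro nn_integral_mono mult_left_mono)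
  fix x
  have "1 / q > 0" using q by simp
  then have "x \<in> {1 / q<..} \<Longrightarrow> x \<in> {0<..}" by (metis greaterThan_iff less_trans)
  then show "indicator {1 / q<..} x \<le> (indicator {0<..} x :: ennreal)"
    by (cases "x \<in> {1 / q<..}") auto
qed simp

lemma Jf_tendsto:
  assumes s: "s > 0" and d: "d > 1" and q1: "\<And>N. q N \<ge> 1" and q: "filterlim q at_top sequentially"
  shows "(\<lambda>N. Jf d s (q N)) \<longlonglongrightarrow> Jinf d s"
  unfolding Jf_def Jinf_def
proof (rule nn_integral_dominated_convergence)
  show "(\<integral>\<^sup>+t. ennreal (t powr (- d) * exp (- 1 / (2 * s * t))) * indicator {0<..} t \<partial>lborel) < \<infinity>"
    using Jinf_eq[OF s d] unfolding Jinf_def by simp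
  show "AE x in lborel. ennreal (x powr (- d) * exp (- 1 / (2 * s * x))) * indicator {1 / q j<..} x
      \<le> ennreal (x powr (- d) * exp (- 1 / (2 * s * x))) * indicator {0<..} x" for j
  proof (rule AE_I2)
    fix x
    have "1 / q j > 0" using q1[of j] by simp
    then have "x \<in> {1 / q j<..} \<Longrightarrow> x \<in> {0<..}" by (metis greaterThan_iff less_trans)
    then show "ennreal (x powr (- d) * exp (- 1 / (2 * s * x))) * indicator {1 / q j<..} x
      \<le> ennreal (x powr (- d) * exp (- 1 / (2 * s * x))) * indicator {0<..} x"
      by (intro mult_left_mono) (cases "x \<in> {1 / q j<..}", auto)
  qed
  show "AE x in lborel. (\<lambda>N. ennreal (x powr (- d) * exp (- 1 / (2 * s * x))) * indicator {1 / q N<..} x)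
      \<longlonglongrightarrow> ennreal (x powr (- d) * exp (- 1 / (2 * s * x))) * indicator {0<..} x"
  proof (rule AE_I2)
    fix x :: real
    have ev: "eventually (\<lambda>N. indicator {1 / q N<..} x = (indicator {0<..} x :: ennreal)) sequentially"
    proof (cases "x > 0")
      case True
      have "eventually (\<lambda>N. q N > 1 / x) sequentially"
        using q by (simp add: filterlim_at_top_dense)
      then show ?thesis
      proof (rule eventually_mono)
        fix N assume "q N > 1 / x"
        then have "1 / q N < x" using True q1[of N] by (simp add: field_simps)
        then show "indicator {1 / q N<..} x = (indicator {0<..} x :: ennreal)" using True by (simp add: indicator_def)
      qed
    next
      case False
      have "1 / q N > 0" for N using q1[of N] by simp
      then have "x \<notin> {1 / q N<..}" for N using False by (metis greaterThan_iff less_trans)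
      then show ?thesis using False by (intro always_eventually allI) simp
    qed
    show "(\<lambda>N. ennreal (x powr (- d) * exp (- 1 / (2 * s * x))) * indicator {1 / q N<..} x)
      \<longlonglongrightarrow> ennreal (x powr (- d) * exp (- 1 / (2 * s * x))) * indicator {0<..} x"
      by (rule tendsto_eventually) (use ev in \<open>auto elim!: eventually_mono\<close>)
  qed
qed measurable

lemma g_subst:
  assumes Q: "Q > 0" and s: "s > 0"
  shows "(\<integral>\<^sup>+g. ennreal ((1 + g) powr (- d) * exp (- Q / (2 * s * (1 + g)))) * indicator {0<..} g \<partial>lborel)
       = ennreal (Q powr (1 - d)) * Jf d s Q"
proof -
  have "(\<integral>\<^sup>+g. ennreal ((1 + g) powr (- d) * exp (- Q / (2 * s * (1 + g)))) * indicator {0<..} g \<partial>lborel)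
      = ennreal \<bar>Q\<bar> * (\<integral>\<^sup>+t. ennreal ((1 + (-1 + Q * t)) powr (- d) * exp (- Q / (2 * s * (1 + (-1 + Q * t)))))
            * indicator {0<..} (-1 + Q * t) \<partial>lborel)"
    by (rule nn_integral_real_affine) (use Q in auto)
  also have "(\<lambda>t. ennreal ((1 + (-1 + Q * t)) powr (- d) * exp (- Q / (2 * s * (1 + (-1 + Q * t)))))
            * indicator {0<..} (-1 + Q * t))
      = (\<lambda>t. ennreal (Q powr (- d)) * (ennreal (t powr (- d) * exp (- 1 / (2 * s * t))) * indicator {1/Q<..} t))"
  proof
    fix t
    show "ennreal ((1 + (-1 + Q * t)) powr (- d) * exp (- Q / (2 * s * (1 + (-1 + Q * t)))))
            * indicator {0<..} (-1 + Q * t)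
        = ennreal (Q powr (- d)) * (ennreal (t powr (- d) * exp (- 1 / (2 * s * t))) * indicator {1/Q<..} t)"
    proof (cases "t > 1 / Q")
      case True
      then have t: "t > 0" using Q by (smt (verit) divide_pos_pos)
      have i: "-1 + Q * t > 0" using True Q by (simp add: field_simps)
      have "(Q * t) powr (- d) = Q powr (- d) * t powr (- d)" using Q t by (simp add: powr_mult)
      moreover have "Q / (2 * s * (Q * t)) = 1 / (2 * s * t)" using Q by simp
      ultimately show ?thesis using True i t Q by (simp add: ennreal_mult[symmetric] mult_ac)
    next
      case False
      then have "\<not> -1 + Q * t > 0" using Q by (simp add: field_simps)
      then show ?thesis using False by simp
    qed
  qed
  also have "ennreal \<bar>Q\<bar> * (\<integral>\<^sup>+t. ennreal (Q powr (- d)) * (ennreal (t powr (- d) * exp (- 1 / (2 * s * t))) * indicator {1/Q<..} t) \<partial>lborel)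
      = ennreal \<bar>Q\<bar> * (ennreal (Q powr (- d)) * Jf d s Q)"
  proof -
    have "(\<integral>\<^sup>+t. ennreal (Q powr (- d)) * (ennreal (t powr (- d) * exp (- 1 / (2 * s * t))) * indicator {1/Q<..} t) \<partial>lborel)
        = ennreal (Q powr (- d)) * Jf d s Q"
      unfolding Jf_def by (rule nn_integral_cmult) (measurable; simp add: greaterThan_def[symmetric])
    then show ?thesis by simp
  qed
  also have "ennreal \<bar>Q\<bar> * (ennreal (Q powr (- d)) * Jf d s Q) = ennreal (Q powr (1 - d)) * Jf d s Q"
  proof -
    have "\<bar>Q\<bar> * Q powr (- d) = Q powr (1 - d)" using Q by (simp add: powr_diff powr_minus_divide)
    then show ?thesis using Q by (simp add: ennreal_mult[symmetric] mult.assoc[symmetric])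
  qed
  finally show ?thesis .
qed

lemma Jf_measurable[measurable]: "(\<lambda>s. Jf d s q) \<in> borel_measurable borel"
  unfolding Jf_def by measurable

lemma Jinf_measurable[measurable]: "(\<lambda>s. Jinf d s) \<in> borel_measurable borel"
  unfolding Jinf_def by measurable

definition hq :: "real \<Rightarrow> real \<Rightarrow> real \<Rightarrow> real \<Rightarrow> real \<Rightarrow> ennreal" where
  "hq e R d q s = ennreal (s powr e * exp (- R / (2 * s))) * indicator {0<..} s * Jf d s q"

definition hinf :: "real \<Rightarrow> real \<Rightarrow> real \<Rightarrow> real \<Rightarrow> ennreal" where
  "hinf e R d s = ennreal (s powr e * exp (- R / (2 * s))) * indicator {0<..} s * Jinf d s"

lemma hq_measurable[measurable]: "hq e R d q \<in> borel_measurable borel"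
proof -
  have "(\<lambda>s. hq e R d q s) \<in> borel_measurable borel" unfolding hq_def by measurable
  then show ?thesis by simp
qed

lemma hinf_measurable[measurable]: "hinf e R d \<in> borel_measurable borel"
proof -
  have "(\<lambda>s. hinf e R d s) \<in> borel_measurable borel" unfolding hinf_def by measurable
  then show ?thesis by simp
qed

lemma hinf_eq:
  assumes d: "d > 1"
  shows "hinf e R d s = ennreal (2 powr (d - 1) * Gamma (d - 1))
           * (ennreal (s powr (e + d - 1) * exp (- (R / 2) / s)) * indicator {0<..} s)"
proof (cases "s > 0")
  case False
  then show ?thesis by (simp add: hinf_def)
next
  case s: True
  have G: "Gamma (d - 1) > 0" using d by (intro Gamma_real_pos) simp
  have "s powr e * exp (- R / (2 * s)) * ((2 * s) powr (d - 1) * Gamma (d - 1))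
      = 2 powr (d - 1) * Gamma (d - 1) * (s powr (e + d - 1) * exp (- (R / 2) / s))"
  proof -
    have "(2 * s) powr (d - 1) = 2 powr (d - 1) * s powr (d - 1)" using s by (simp add: powr_mult)
    moreover have "s powr (e + d - 1) = s powr e * s powr (d - 1)"
    proof -
      have "s powr (e + d - 1) = s powr (e + (d - 1))" by (simp add: algebra_simps)
      also have "\<dots> = s powr e * s powr (d - 1)" by (rule powr_add)
      finally show ?thesis .
    qed
    moreover have "- R / (2 * s) = - (R / 2) / s" by simp
    ultimately show ?thesis by (simp only: mult_ac)
  qed
  then show ?thesis using s G
    by (simp add: hinf_def Jinf_eq[OF s d] ennreal_mult[symmetric])
qed

lemma hinf_integral:
  assumes d: "d > 1" and k: "k > 0" and R: "R > 0" and e: "e + d - 1 = - (k + 1)" and A[measurable]: "A \<in> sets borel"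
  shows "(\<integral>\<^sup>+s. hinf e R d s * indicator A s \<partial>lborel)
       = ennreal (2 powr (d - 1) * Gamma (d - 1)) * (\<integral>\<^sup>+s. ennreal (s powr (- (k + 1)) * exp (- (R / 2) / s)) * indicator {0<..} s * indicator A s \<partial>lborel)"
proof -
  have "(\<integral>\<^sup>+s. hinf e R d s * indicator A s \<partial>lborel) = (\<integral>\<^sup>+s. ennreal (2 powr (d - 1) * Gamma (d - 1))
      * (ennreal (s powr (- (k + 1)) * exp (- (R / 2) / s)) * indicator {0<..} s * indicator A s) \<partial>lborel)"
    unfolding hinf_eq[OF d] e by (simp only: mult.assoc)
  also have "\<dots> = ennreal (2 powr (d - 1) * Gamma (d - 1)) * (\<integral>\<^sup>+s. ennreal (s powr (- (k + 1)) * exp (- (R / 2) / s)) * indicator {0<..} s * indicator A s \<partial>lborel)"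
    by (rule nn_integral_cmult) measurable
  finally show ?thesis .
qed

lemma hinf_total:
  assumes d: "d > 1" and k: "k > 0" and R: "R > 0" and e: "e + d - 1 = - (k + 1)"
  shows "(\<integral>\<^sup>+s. hinf e R d s \<partial>lborel)
       = ennreal (2 powr (d - 1) * Gamma (d - 1) * ((R / 2) powr (- k) * Gamma k))"
proof -
  have "(\<integral>\<^sup>+s. hinf e R d s \<partial>lborel) = (\<integral>\<^sup>+s. hinf e R d s * indicator UNIV s \<partial>lborel)" by simp
  also have "\<dots> = ennreal (2 powr (d - 1) * Gamma (d - 1)) * ennreal ((R / 2) powr (- k) * Gamma k)"
    unfolding hinf_integral[OF d k R e sets.top[of borel, unfolded space_borel]] using inv_gamma_integral[of k "R / 2"] k R by simp
  also have "\<dots> = ennreal (2 powr (d - 1) * Gamma (d - 1) * ((R / 2) powr (- k) * Gamma k))"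
    using d k by (simp add: ennreal_mult[symmetric] Gamma_real_pos)
  finally show ?thesis .
qed

lemma hq_tendsto:
  assumes d: "d > 1" and k: "k > 0" and R: "R > 0" and e: "e + d - 1 = - (k + 1)"
    and q1: "\<And>N. q N \<ge> 1" and q: "filterlim q at_top sequentially" and A[measurable]: "A \<in> sets borel"
  shows "(\<lambda>N. \<integral>\<^sup>+s. hq e R d (q N) s * indicator A s \<partial>lborel) \<longlonglongrightarrow> (\<integral>\<^sup>+s. hinf e R d s * indicator A s \<partial>lborel)"
proof (rule nn_integral_dominated_convergence)
  have "(\<integral>\<^sup>+s. hinf e R d s * indicator A s \<partial>lborel) \<le> (\<integral>\<^sup>+s. hinf e R d s \<partial>lborel)"
    by (intro nn_integral_mono) (simp add: indicator_def)
  also have "\<dots> < \<infinity>" unfolding hinf_total[OF d k R e] by simp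
  finally show "(\<integral>\<^sup>+s. hinf e R d s * indicator A s \<partial>lborel) < \<infinity>" .
  show "AE x in lborel. hq e R d (q j) x * indicator A x \<le> hinf e R d x * indicator A x" for j
  proof (rule AE_I2)
    fix x
    have "Jf d x (q j) \<le> Jinf d x" by (rule Jf_le) (use q1[of j] in simp)
    then show "hq e R d (q j) x * indicator A x \<le> hinf e R d x * indicator A x"
      unfolding hq_def hinf_def by (intro mult_right_mono mult_left_mono) auto
  qed
  show "AE x in lborel. (\<lambda>N. hq e R d (q N) x * indicator A x) \<longlonglongrightarrow> hinf e R d x * indicator A x"
  proof (rule AE_I2)
    fix x :: real
    show "(\<lambda>N. hq e R d (q N) x * indicator A x) \<longlonglongrightarrow> hinf e R d x * indicator A x"
    proof (cases "x > 0")
      case False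
      then show ?thesis by (simp add: hq_def hinf_def)
    next
      case True
      have "(\<lambda>N. Jf d x (q N)) \<longlonglongrightarrow> Jinf d x" by (rule Jf_tendsto[OF True d q1 q])
      then have "(\<lambda>N. (ennreal (x powr e * exp (- R / (2 * x))) * indicator {0<..} x * indicator A x) * Jf d x (q N))
          \<longlonglongrightarrow> (ennreal (x powr e * exp (- R / (2 * x))) * indicator {0<..} x * indicator A x) * Jinf d x"
        by (intro ennreal_tendsto_cmult) (auto simp: indicator_def)
      then show ?thesis by (simp add: hq_def hinf_def mult_ac)
    qed
  qed
qed measurable


lemma unnorm_eq_hq:
  fixes X :: "real^'p^'n"
  assumes inj: "inj ((*v) X)" and cen: "centered_design X"
    and y: "y = vec c + X *v b + r" and r1: "\<And>\<beta>. r \<bullet> (X *v \<beta>) = 0" and r2: "r \<bullet> vec 1 = 0"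
    and K: "K1 X a \<ge> 0" and Q: "(norm (X *v b))\<^sup>2 > 0"
  shows "sigma2_post_unnorm X a y s
       = ennreal (sqrt (2 * pi / real CARD('n)) * K1 X a * 2 powr (real CARD('p) / 2)
                  * ((norm (X *v b))\<^sup>2) powr (1 - (a + real CARD('p)) / 2)) * GX X
         * hq (- (real CARD('n) + 1) / 2) ((norm r)\<^sup>2) ((a + real CARD('p)) / 2) ((norm (X *v b))\<^sup>2) s"
proof (cases "s > 0")
  case False
  then show ?thesis by (simp add: sigma2_post_unnorm_def hq_def)
next
  case s: True
  define n where "n = real CARD('n)"
  define p where "p = real CARD('p)"
  define R where "R = (norm r)\<^sup>2"
  define Qv where "Qv = (norm (X *v b))\<^sup>2"
  define d where "d = (a + p) / 2"
  define A where "A = K1 X a * 2 powr (p / 2) * s powr (- n / 2 - 1) * exp (- R / (2 * s))"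
  have A: "A \<ge> 0" using K by (simp add: A_def)
  have n: "n > 0" by (simp add: n_def)
  have Vg_eq: "Vg X a b R s g = ennreal A * GX X * (ennreal ((1 + g) powr (- d) * exp (- Qv / (2 * s * (1 + g)))) * indicator {0<..} g)" for g
  proof -
    have "- (a + p) / 2 = - d" by (simp only: d_def minus_divide_left)
    then show ?thesis
      using A by (simp add: Vg_def A_def n_def p_def Qv_def ennreal_mult[symmetric] mult_ac)
  qed
  have "(\<integral>\<^sup>+g. Vg X a b R s g \<partial>lborel) = ennreal A * GX X * (\<integral>\<^sup>+g. ennreal ((1 + g) powr (- d) * exp (- Qv / (2 * s * (1 + g)))) * indicator {0<..} g \<partial>lborel)"
    unfolding Vg_eq by (rule nn_integral_cmult) measurable
  also have "\<dots> = ennreal A * GX X * (ennreal (Qv powr (1 - d)) * Jf d s Qv)"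
    by (subst g_subst) (use Q s in \<open>simp_all add: Qv_def\<close>)
  finally have I: "(\<integral>\<^sup>+g. Vg X a b R s g \<partial>lborel) = ennreal A * GX X * (ennreal (Qv powr (1 - d)) * Jf d s Qv)" .
  have sq: "sqrt (2 * pi * (s / n)) = sqrt (2 * pi / n) * s powr (1 / 2)"
  proof -
    have "2 * pi * (s / n) = (2 * pi / n) * s" by simp
    then have "sqrt (2 * pi * (s / n)) = sqrt (2 * pi / n) * sqrt s" by (simp only: real_sqrt_mult)
    then show ?thesis using s by (simp add: powr_half_sqrt)
  qed
  have sp: "s powr (1 / 2) * s powr (- n / 2 - 1) = s powr (- (n + 1) / 2)"
  proof -
    have "s powr (- (n + 1) / 2) = s powr (1 / 2 + (- n / 2 - 1))" by (simp add: field_simps)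
    also have "\<dots> = s powr (1 / 2) * s powr (- n / 2 - 1)" by (rule powr_add)
    finally show ?thesis by simp
  qed
  have "sigma2_post_unnorm X a y s = ennreal (sqrt (2 * pi * (s / n))) * (ennreal A * GX X * (ennreal (Qv powr (1 - d)) * Jf d s Qv))"
    unfolding marginal_formula[OF inj cen y r1 r2 K s] I[unfolded R_def] n_def ..
  also have "\<dots> = ennreal (sqrt (2 * pi / n) * K1 X a * 2 powr (p / 2) * Qv powr (1 - d)) * GX X
      * (ennreal (s powr (- (n + 1) / 2) * exp (- R / (2 * s))) * Jf d s Qv)"
  proof -
    have f1: "sqrt (2 * pi * (s / n)) * (A * Qv powr (1 - d))
        = (sqrt (2 * pi / n) * K1 X a * 2 powr (p / 2) * Qv powr (1 - d)) * (s powr (- (n + 1) / 2) * exp (- R / (2 * s)))"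
      unfolding sq A_def sp[symmetric] by (simp only: mult_ac)
    have f2: "ennreal (sqrt (2 * pi * (s / n))) * (ennreal A * GX X * (ennreal (Qv powr (1 - d)) * Jf d s Qv))
        = ennreal (sqrt (2 * pi * (s / n)) * (A * Qv powr (1 - d))) * GX X * Jf d s Qv"
    proof -
      have "sqrt (2 * pi * (s / n)) \<ge> 0" "Qv powr (1 - d) \<ge> 0" using s n by auto
      then show ?thesis using A by (simp add: ennreal_mult mult_ac)
    qed
    have f3: "ennreal (sqrt (2 * pi / n) * K1 X a * 2 powr (p / 2) * Qv powr (1 - d)) * GX X
      * (ennreal (s powr (- (n + 1) / 2) * exp (- R / (2 * s))) * Jf d s Qv)
        = ennreal ((sqrt (2 * pi / n) * K1 X a * 2 powr (p / 2) * Qv powr (1 - d)) * (s powr (- (n + 1) / 2) * exp (- R / (2 * s)))) * GX X * Jf d s Qv"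
    proof -
      define x where "x = sqrt (2 * pi / n) * K1 X a * 2 powr (p / 2) * Qv powr (1 - d)"
      define z where "z = s powr (- (n + 1) / 2) * exp (- R / (2 * s))"
      have "x \<ge> 0" "z \<ge> 0" using K n by (auto simp: x_def z_def)
      have "ennreal x * GX X * (ennreal z * Jf d s Qv) = (ennreal x * ennreal z) * GX X * Jf d s Qv"
        by (simp only: mult_ac)
      also have "ennreal x * ennreal z = ennreal (x * z)" using \<open>x \<ge> 0\<close> \<open>z \<ge> 0\<close> by (rule ennreal_mult[symmetric])
      finally show ?thesis unfolding x_def z_def .
    qed
    show ?thesis unfolding f2 f3 f1 ..
  qed
  finally show ?thesis using s
    by (simp add: hq_def n_def p_def R_def Qv_def d_def)
qed

lemma density_ratio:
  fixes h :: "real \<Rightarrow> ennreal" and cr :: real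
  assumes h[measurable]: "h \<in> borel_measurable borel" and cr: "cr > 0"
    and Hpos: "(\<integral>\<^sup>+s. h s \<partial>lborel) > 0" and Hfin: "(\<integral>\<^sup>+s. h s \<partial>lborel) < \<infinity>"
    and A[measurable]: "A \<in> sets borel"
  shows "measure (density lborel (\<lambda>s. (ennreal cr * h s) / (\<integral>\<^sup>+t. ennreal cr * h t \<partial>lborel))) A
       = enn2real (\<integral>\<^sup>+s. h s * indicator A s \<partial>lborel) / enn2real (\<integral>\<^sup>+s. h s \<partial>lborel)"
proof -
  define H where "H = (\<integral>\<^sup>+s. h s \<partial>lborel)"
  obtain Hr where Hr: "H = ennreal Hr" "Hr > 0"
    using Hpos Hfin unfolding H_def by (cases "\<integral>\<^sup>+s. h s \<partial>lborel") (auto simp: ennreal_less_zero_iff)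
  have Z: "(\<integral>\<^sup>+t. ennreal cr * h t \<partial>lborel) = ennreal (cr * Hr)"
    using cr Hr by (simp add: nn_integral_cmult H_def ennreal_mult)
  have pt: "(ennreal cr * h s) / (\<integral>\<^sup>+t. ennreal cr * h t \<partial>lborel) = h s * ennreal (1 / Hr)" for s
  proof -
    have "(ennreal cr * h s) / ennreal (cr * Hr) = ennreal cr * h s * ennreal (inverse (cr * Hr))"
      using cr Hr by (simp add: divide_ennreal_def inverse_ennreal)
    also have "\<dots> = h s * (ennreal cr * ennreal (inverse (cr * Hr)))" by (simp only: mult_ac)
    also have "ennreal cr * ennreal (inverse (cr * Hr)) = ennreal (1 / Hr)"
      using cr Hr by (simp add: ennreal_mult[symmetric] field_simps)
    finally show ?thesis unfolding Z .
  qed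
  have le: "(\<integral>\<^sup>+s. h s * indicator A s \<partial>lborel) \<le> H"
    unfolding H_def by (intro nn_integral_mono) (simp add: indicator_def)
  then obtain ar where ar: "(\<integral>\<^sup>+s. h s * indicator A s \<partial>lborel) = ennreal ar" "ar \<ge> 0"
    using Hr by (cases "\<integral>\<^sup>+s. h s * indicator A s \<partial>lborel") (auto simp: top_unique)
  have "emeasure (density lborel (\<lambda>s. (ennreal cr * h s) / (\<integral>\<^sup>+t. ennreal cr * h t \<partial>lborel))) A
      = (\<integral>\<^sup>+s. h s * ennreal (1 / Hr) * indicator A s \<partial>lborel)"
    unfolding pt by (subst emeasure_density) auto
  also have "\<dots> = (\<integral>\<^sup>+s. h s * indicator A s \<partial>lborel) * ennreal (1 / Hr)"
    by (subst nn_integral_multc[symmetric]) (auto simp: mult_ac)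
  also have "\<dots> = ennreal (ar / Hr)" using ar Hr by (simp add: ennreal_mult[symmetric])
  finally show ?thesis
    using ar Hr unfolding measure_def H_def[symmetric] by simp
qed


lemma Q_tendsto:
  fixes X :: "real^'p^'n" and \<beta> :: "nat \<Rightarrow> real^'p"
  assumes inj: "inj ((*v) X)"
    and div: "filterlim (\<lambda>N. norm (\<chi> j. if j \<in> S then \<beta> N $ j else 0)) at_top sequentially"
  shows "filterlim (\<lambda>N. (norm (X *v (\<beta> N + b0)))\<^sup>2) at_top sequentially"
proof -
  obtain B where B: "B > 0" "\<And>x. B * norm x \<le> norm (X *v x)"
    using linear_inj_bounded_below_pos[of "(*v) X"] inj by (metis matrix_vector_mul_linear)
  have comp: "norm (\<chi> j. if j \<in> S then \<beta> N $ j else 0) \<le> norm (\<beta> N)" for N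
    by (rule norm_le_componentwise_cart) auto
  show ?thesis
    unfolding filterlim_at_top
  proof
    fix Z :: real
    define W where "W = sqrt \<bar>Z\<bar> / B + norm b0"
    have "eventually (\<lambda>N. W \<le> norm (\<chi> j. if j \<in> S then \<beta> N $ j else 0)) sequentially"
      using div unfolding filterlim_at_top by blast
    then show "eventually (\<lambda>N. Z \<le> (norm (X *v (\<beta> N + b0)))\<^sup>2) sequentially"
    proof (rule eventually_mono)
      fix N assume "W \<le> norm (\<chi> j. if j \<in> S then \<beta> N $ j else 0)"
      then have "W \<le> norm (\<beta> N)" using comp[of N] by linarith
      moreover have "norm (\<beta> N) - norm b0 \<le> norm (\<beta> N + b0)" by (metis norm_diff_ineq)
      ultimately have "sqrt \<bar>Z\<bar> / B \<le> norm (\<beta> N + b0)" unfolding W_def by linarith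
      then have "sqrt \<bar>Z\<bar> \<le> B * norm (\<beta> N + b0)" using B(1) by (simp add: field_simps)
      also have "\<dots> \<le> norm (X *v (\<beta> N + b0))" by (rule B(2))
      finally have "(sqrt \<bar>Z\<bar>)\<^sup>2 \<le> (norm (X *v (\<beta> N + b0)))\<^sup>2" by (intro power_mono) auto
      then show "Z \<le> (norm (X *v (\<beta> N + b0)))\<^sup>2" by simp
    qed
  qed
qed

lemma ig_ratio:
  assumes d: "d > 1" and k: "k > 0" and R: "R > 0" and e: "e + d - 1 = - (k + 1)" and A[measurable]: "A \<in> sets borel"
  shows "measure (inv_gamma_measure k (2 / R)) A
       = enn2real (\<integral>\<^sup>+s. hinf e R d s * indicator A s \<partial>lborel) / enn2real (\<integral>\<^sup>+s. hinf e R d s \<partial>lborel)"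
proof -
  define Cg where "Cg = 2 powr (d - 1) * Gamma (d - 1)"
  have Cg: "Cg > 0" using d by (simp add: Cg_def Gamma_real_pos)
  have Gk: "Gamma k > 0" using k by (simp add: Gamma_real_pos)
  define I where "I = (\<integral>\<^sup>+s. ennreal (s powr (- (k + 1)) * exp (- (R / 2) / s)) * indicator {0<..} s * indicator A s \<partial>lborel)"
  have "I \<le> (\<integral>\<^sup>+s. ennreal (s powr (- (k + 1)) * exp (- (R / 2) / s)) * indicator {0<..} s \<partial>lborel)"
    unfolding I_def by (intro nn_integral_mono) (simp add: indicator_def)
  also have "\<dots> = ennreal ((R / 2) powr (- k) * Gamma k)" by (rule inv_gamma_integral) (use k R in auto)
  finally obtain ir where ir: "I = ennreal ir" "ir \<ge> 0"
    by (cases I) (auto simp: top_unique)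
  define cig where "cig = (R / 2) powr k / Gamma k"
  have cig: "cig > 0" using R Gk by (simp add: cig_def)
  have pt: "ennreal (inv_gamma_density k (2 / R) s) = ennreal cig * (ennreal (s powr (- (k + 1)) * exp (- (R / 2) / s)) * indicator {0<..} s)" for s
  proof (cases "s > 0")
    case False
    then show ?thesis by (simp add: inv_gamma_density_def)
  next
    case True
    have "- 1 / (2 / R * s) = - (R / 2) / s" using R True by (simp add: field_simps)
    moreover have "1 / (2 / R) = R / 2" by simp
    ultimately have "inv_gamma_density k (2 / R) s = cig * (s powr (- (k + 1)) * exp (- (R / 2) / s))"
      using True by (simp add: inv_gamma_density_def cig_def)
    then show ?thesis using True cig by (simp add: ennreal_mult)
  qed
  have "emeasure (inv_gamma_measure k (2 / R)) A = (\<integral>\<^sup>+s. ennreal (inv_gamma_density k (2 / R) s) * indicator A s \<partial>lborel)"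
    unfolding inv_gamma_measure_def by (subst emeasure_density) (auto simp: inv_gamma_density_def)
  also have "\<dots> = ennreal cig * I"
    unfolding pt I_def by (subst nn_integral_cmult[symmetric]) (measurable, simp add: mult.assoc)
  finally have m: "measure (inv_gamma_measure k (2 / R)) A = cig * ir"
    using ir cig unfolding measure_def by (simp add: ennreal_mult[symmetric])
  have n: "(\<integral>\<^sup>+s. hinf e R d s * indicator A s \<partial>lborel) = ennreal (Cg * ir)"
    unfolding hinf_integral[OF d k R e A] Cg_def[symmetric] I_def[symmetric] ir using Cg ir by (simp add: ennreal_mult)
  have t: "(\<integral>\<^sup>+s. hinf e R d s \<partial>lborel) = ennreal (Cg * ((R / 2) powr (- k) * Gamma k))"
    unfolding hinf_total[OF d k R e] Cg_def ..
  show ?thesis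
    unfolding m n t using Cg ir R Gk
    by (simp add: cig_def powr_minus field_simps)
qed

lemma hq_le_hinf:
  assumes "q > 0"
  shows "hq e R d q s \<le> hinf e R d s"
  unfolding hq_def hinf_def using Jf_le[OF assms] by (intro mult_left_mono) auto

theorem corollary3p1:
  fixes X :: "real^'p^'n"
    and S :: "'p set"
    and a \<alpha> :: real
    and \<beta>2 :: "real^'p"
    and \<epsilon> :: "real^'n"
    and \<beta> :: "nat \<Rightarrow> real^'p"
    and y :: "nat \<Rightarrow> real^'n"
  assumes a_gt: "a > 2"
    and centered: "centered_design X"
    and full_rank: "rank X = CARD('p)"
    and block2_fixed: "\<And>N j. j \<notin> S \<Longrightarrow> \<beta> N $ j = \<beta>2 $ j"
    and block1_diverges:
      "filterlim (\<lambda>N. norm (\<chi> j. if j \<in> S then \<beta> N $ j else 0)) at_top sequentially"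
    and data: "\<And>N. y N = vec \<alpha> + X *v \<beta> N + \<epsilon>"
    and n_large: "real CARD('n) > a + real CARD('p) - 1"
    and resid_pos: "sigma_hat2 X (y 0) > 0"
  shows "(\<forall>N. sigma_hat2 X (y N) = sigma_hat2 X (y 0)) \<and>
         weak_conv_m (\<lambda>N. sigma2_posterior X a (y N))
           (inv_gamma_measure ((real CARD('n) + 1 - a - real CARD('p)) / 2)
              (2 / ((real CARD('n) - real CARD('p) - 1) * sigma_hat2 X (y 0))))"
proof -
  have inj: "inj ((*v) X)" using full_rank full_rank_injective by blast
  obtain c0 b0 r where eps: "\<epsilon> = vec c0 + X *v b0 + r" and r1: "\<And>\<beta>. r \<bullet> (X *v \<beta>) = 0" and r2: "r \<bullet> vec 1 = 0"
    using decomp_exists[of \<epsilon> X] by blast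
  have yN: "y N = vec (\<alpha> + c0) + X *v (\<beta> N + b0) + r" for N
    using data[of N] eps by (simp add: matrix_vector_right_distrib vec_eq_iff algebra_simps)
  define n where "n = real CARD('n)"
  define p where "p = real CARD('p)"
  define R where "R = (norm r)\<^sup>2"
  have sig: "sigma_hat2 X (y N) = R / (n - p - 1)" for N
    unfolding R_def n_def p_def by (rule sigma_hat2_eq[OF centered yN r1 r2])
  have conj1: "\<forall>N. sigma_hat2 X (y N) = sigma_hat2 X (y 0)" using sig by simp
  have R0: "R \<ge> 0" by (simp add: R_def)
  from resid_pos have "R / (n - p - 1) > 0" by (simp add: sig)
  then have Rpos: "R > 0" and Dpos: "n - p - 1 > 0" using R0 by (auto simp: zero_less_divide_iff)
  have theta: "2 / ((real CARD('n) - real CARD('p) - 1) * sigma_hat2 X (y 0)) = 2 / R"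
    using Dpos by (simp add: sig n_def p_def)
  define d where "d = (a + real CARD('p)) / 2"
  define k where "k = (real CARD('n) + 1 - a - real CARD('p)) / 2"
  define e where "e = - (real CARD('n) + 1) / 2"
  have p1: "real CARD('p) \<ge> 1" by simp
  have d: "d > 1" using a_gt p1 by (simp add: d_def)
  have k: "k > 0" using n_large by (simp add: k_def)
  have e: "e + d - 1 = - (k + 1)" by (simp add: e_def d_def k_def field_simps)
  have K1: "K1 X a > 0"
    using det_gram_pos[OF inj] a_gt by (simp add: K1_def)
  obtain g0 where g0: "GX X = ennreal g0" "g0 > 0"
    using gauss_vec_pos[of X] gauss_vec_finite[OF inj] unfolding GX_def[symmetric]
    by (cases "GX X") (auto simp: ennreal_less_zero_iff)
  define Q where "Q N = (norm (X *v (\<beta> N + b0)))\<^sup>2" for N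
  have Qlim: "filterlim Q at_top sequentially"
    unfolding Q_def by (rule Q_tendsto[OF inj block1_diverges])
  define q where "q N = max 1 (Q N)" for N
  have q1: "q N \<ge> 1" for N by (simp add: q_def)
  have qlim: "filterlim q at_top sequentially"
    by (rule filterlim_at_top_mono[OF Qlim]) (simp add: q_def)
  have evQ: "eventually (\<lambda>N. Q N \<ge> 1) sequentially"
    using Qlim unfolding filterlim_at_top by blast
  define B where "B = (\<integral>\<^sup>+s. hinf e R d s \<partial>lborel)"
  define bB where "bB = 2 powr (d - 1) * Gamma (d - 1) * ((R / 2) powr (- k) * Gamma k)"
  have B: "B = ennreal bB" unfolding B_def bB_def by (rule hinf_total[OF d k Rpos e])
  have bB: "bB > 0" using d k Rpos by (simp add: bB_def Gamma_real_pos)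
  define Hq where "Hq N = (\<integral>\<^sup>+s. hq e R d (q N) s \<partial>lborel)" for N
  have HqB: "Hq N \<le> B" for N
    unfolding Hq_def B_def by (intro nn_integral_mono hq_le_hinf) (use q1[of N] in simp)
  have Hlim: "Hq \<longlonglongrightarrow> B"
    using hq_tendsto[OF d k Rpos e q1 qlim, of UNIV] unfolding Hq_def B_def by simp
  have evH: "eventually (\<lambda>N. Hq N > 0) sequentially"
    using order_tendstoD(1)[OF Hlim, of 0] bB B by simp
  have post_eq: "measure (sigma2_posterior X a (y N)) A
      = enn2real (\<integral>\<^sup>+s. hq e R d (q N) s * indicator A s \<partial>lborel) / enn2real (Hq N)"
    if QN: "Q N \<ge> 1" and HN: "Hq N > 0" and A[measurable]: "A \<in> sets borel" for N A
  proof -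
    define cr where "cr = sqrt (2 * pi / real CARD('n)) * K1 X a * 2 powr (real CARD('p) / 2)
                  * ((norm (X *v (\<beta> N + b0)))\<^sup>2) powr (1 - (a + real CARD('p)) / 2)"
    have pw: "0 < ((norm (X *v (\<beta> N + b0)))\<^sup>2) powr (1 - (a + real CARD('p)) / 2)"
      using QN by (auto simp: Q_def)
    have cr: "cr > 0" unfolding cr_def using K1 pw by (intro mult_pos_pos) auto
    have qN: "q N = Q N" using QN by (simp add: q_def)
    have m: "sigma2_post_unnorm X a (y N) = (\<lambda>s. ennreal (cr * g0) * hq e R d (q N) s)"
    proof
      fix s
      have "sigma2_post_unnorm X a (y N) s = ennreal cr * GX X * hq e R d (Q N) s"
        unfolding cr_def e_def R_def d_def Q_def
      proof (rule unnorm_eq_hq[OF inj centered yN r1 r2 less_imp_le[OF K1]])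
        show "(norm (X *v (\<beta> N + b0)))\<^sup>2 > 0" using QN unfolding Q_def by linarith
      qed
      then show "sigma2_post_unnorm X a (y N) s = ennreal (cr * g0) * hq e R d (q N) s"
        using cr g0 qN by (simp add: ennreal_mult)
    qed
    have "measure (sigma2_posterior X a (y N)) A
        = measure (density lborel (\<lambda>s. (ennreal (cr * g0) * hq e R d (q N) s) / (\<integral>\<^sup>+t. ennreal (cr * g0) * hq e R d (q N) t \<partial>lborel))) A"
      unfolding sigma2_posterior_def m ..
    also have "\<dots> = enn2real (\<integral>\<^sup>+s. hq e R d (q N) s * indicator A s \<partial>lborel) / enn2real (\<integral>\<^sup>+s. hq e R d (q N) s \<partial>lborel)"
    proof (rule density_ratio)
      show "0 < cr * g0" using cr g0 by simp
      show "(\<integral>\<^sup>+s. hq e R d (q N) s \<partial>lborel) > 0" using HN by (simp add: Hq_def)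
      show "(\<integral>\<^sup>+s. hq e R d (q N) s \<partial>lborel) < \<infinity>"
        using HqB[of N] B by (simp add: Hq_def order.strict_trans1)
    qed auto
    finally show ?thesis by (simp add: Hq_def)
  qed
  have conj2: "weak_conv_m (\<lambda>N. sigma2_posterior X a (y N))
           (inv_gamma_measure ((real CARD('n) + 1 - a - real CARD('p)) / 2)
              (2 / ((real CARD('n) - real CARD('p) - 1) * sigma_hat2 X (y 0))))"
    unfolding weak_conv_m_def weak_conv_def cdf_def theta k_def[symmetric]
  proof (intro allI impI)
    fix x :: real
    define Ax where "Ax = (\<integral>\<^sup>+s. hinf e R d s * indicator {..x} s \<partial>lborel)"
    have "Ax \<le> B" unfolding Ax_def B_def by (intro nn_integral_mono) (simp add: indicator_def)
    then obtain ax where ax: "Ax = ennreal ax" "ax \<ge> 0" using B by (cases Ax) (auto simp: top_unique)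
    have l1: "(\<lambda>N. \<integral>\<^sup>+s. hq e R d (q N) s * indicator {..x} s \<partial>lborel) \<longlonglongrightarrow> ennreal ax"
      using hq_tendsto[OF d k Rpos e q1 qlim, of "{..x}"] ax unfolding Ax_def by simp
    have l2: "Hq \<longlonglongrightarrow> ennreal bB" using Hlim B by simp
    have lim: "(\<lambda>N. enn2real (\<integral>\<^sup>+s. hq e R d (q N) s * indicator {..x} s \<partial>lborel) / enn2real (Hq N)) \<longlonglongrightarrow> ax / bB"
      by (intro tendsto_divide tendsto_enn2real l1 l2) (use ax bB in auto)
    have ig: "measure (inv_gamma_measure k (2 / R)) {..x} = ax / bB"
      using ig_ratio[OF d k Rpos e, of "{..x}"] ax B bB unfolding Ax_def B_def by simp
    have ev: "eventually (\<lambda>N. enn2real (\<integral>\<^sup>+s. hq e R d (q N) s * indicator {..x} s \<partial>lborel) / enn2real (Hq N)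
        = measure (sigma2_posterior X a (y N)) {..x}) sequentially"
      using evQ evH by eventually_elim (simp add: post_eq)
    show "(\<lambda>N. measure (sigma2_posterior X a (y N)) {..x}) \<longlonglongrightarrow> measure (inv_gamma_measure k (2 / R)) {..x}"
      unfolding ig using Lim_transform_eventually[OF lim ev] .
  qed
  show ?thesis using conj1 conj2 by blast
qed


end
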